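(* Let $s>1/2$. For $\tau\in\mathbb{R}$ let $\mathcal H_1(\tau)$ be the linear operator on $2\pi$-periodic functions defined by $\mathcal H_1(\tau)e_n=e^{-in^3\tau}e_n$, $n\in\mathbb Z$, and for $w\in H^s$ set $$F(\tau,w):=\mathcal H_1(-\tau)\big(\mathcal H_1(\tau)w\cdot|\mathcal H_1(\tau)w|^2\big).$$ Then for every fixed $\tau$ the map $w\mapsto F(\tau,w)$ is a bounded smooth map from $H^s$ to itself with $$\|F(\tau,w)\|_{H^s}\le C_s\|w\|_{H^s}^3,$$ where $C_s$ does not depend on $\tau$. Moreover, $F$ is $2\pi$-periodic in $\tau$ and its time average $\frac1{2\pi}\int_0^{2\pi}F(\tau,w)\,d\tau=:N(w)$ is given by $$N(w)=2w\|w\|_{H}^2+\bar w\, [w,w]-2 w_0|w_0|^2e_0-\sum_{n\ne0}w_n(|w_n|^2+2|w_{-n}|^2)e_n,$$ equivalently $$N(w)=\Big(2w_0(\|w\|^2_H-|w_0|^2)+\bar w_0[w,w]\Big)e_0+\sum_{n\ne0}\Big(w_n(2\|w\|^2_H-|w_n|^2-2|w_{-n}|^2)+\bar w_{-n}[w,w]\Big)e_n.$$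
   Context: $e_n(x)=e^{inx}$, $n\in\mathbb Z$. $H=L^2_{per}(-\pi,\pi)$ is the space of complex-valued $2\pi$-periodic square-integrable functions; every $v$ is written $v=\sum_{n\in\mathbb Z}v_ne_n$, with $\|v\|_H^2=\sum_n|v_n|^2$ and $\|v\|_{H^s}^2=\sum_n(|n|^2+1)^s|v_n|^2$ ($H^s$ the periodic Sobolev space). For $w=\sum w_ne_n$, $v=\sum v_ne_n$, $[w,v]:=\sum_{n\in\mathbb Z}w_nv_{-n}$, and $\bar w$ is the complex conjugate function, $\bar w=\sum_n \bar w_{-n}e_n$. *)

theory Defs
  imports "HOL-Analysis.Analysis"
begin

text \<open>A 2pi-periodic function v is represented by its Fourier coefficient sequence
  (v_n), n in Z, i.e. v = sum_n v_n e_n.\<close>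

type_synonym fseq = "int \<Rightarrow> complex"

definition Hs_weight :: "real \<Rightarrow> int \<Rightarrow> real" where
  "Hs_weight s n = ((real_of_int \<bar>n\<bar>)^2 + 1) powr s"

definition Hs :: "real \<Rightarrow> fseq set" where
  "Hs s = {v. (\<lambda>n. Hs_weight s n * (cmod (v n))^2) summable_on UNIV}"

definition Hs_norm :: "real \<Rightarrow> fseq \<Rightarrow> real" where
  "Hs_norm s v = sqrt (\<Sum>\<^sub>\<infinity>n\<in>UNIV. Hs_weight s n * (cmod (v n))^2)"

definition H_norm2 :: "fseq \<Rightarrow> real" where
  "H_norm2 v = (\<Sum>\<^sub>\<infinity>n\<in>UNIV. (cmod (v n))^2)"

definition bracket :: "fseq \<Rightarrow> fseq \<Rightarrow> complex" where
  "bracket w v = (\<Sum>\<^sub>\<infinity>n\<in>UNIV. w n * v (- n))"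

text \<open>Fourier coefficients of the pointwise product of two functions (convolution)\<close>
definition fmult :: "fseq \<Rightarrow> fseq \<Rightarrow> fseq" where
  "fmult u v = (\<lambda>n. \<Sum>\<^sub>\<infinity>m\<in>UNIV. u m * v (n - m))"

text \<open>complex conjugate function: conj w = sum_n cnj(w_{-n}) e_n\<close>
definition fconj :: "fseq \<Rightarrow> fseq" where
  "fconj w = (\<lambda>n. cnj (w (- n)))"

definition fadd :: "fseq \<Rightarrow> fseq \<Rightarrow> fseq" where
  "fadd u v = (\<lambda>n. u n + v n)"

definition fdiff :: "fseq \<Rightarrow> fseq \<Rightarrow> fseq" where
  "fdiff u v = (\<lambda>n. u n - v n)"

definition fscale :: "real \<Rightarrow> fseq \<Rightarrow> fseq" where
  "fscale a u = (\<lambda>n. complex_of_real a * u n)"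

definition H1 :: "real \<Rightarrow> fseq \<Rightarrow> fseq" where
  "H1 \<tau> w = (\<lambda>n. exp (- \<i> * of_int (n^3) * of_real \<tau>) * w n)"

text \<open>F(tau,w) = H_1(-tau)(H_1(tau)w * |H_1(tau)w|^2), with |u|^2 = u * conj u\<close>
definition Fnl :: "real \<Rightarrow> fseq \<Rightarrow> fseq" where
  "Fnl \<tau> w = (let u = H1 \<tau> w in H1 (- \<tau>) (fmult u (fmult u (fconj u))))"

definition Navg :: "fseq \<Rightarrow> fseq" where
  "Navg w = (\<lambda>n. integral {0..2*pi} (\<lambda>\<tau>. Fnl \<tau> w n) / complex_of_real (2*pi))"

definition multilin_bounded :: "real \<Rightarrow> nat \<Rightarrow> (fseq list \<Rightarrow> fseq) \<Rightarrow> bool" where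
  "multilin_bounded s k T \<longleftrightarrow>
     (\<forall>hs. length hs = k \<and> set hs \<subseteq> Hs s \<longrightarrow> T hs \<in> Hs s) \<and>
     (\<forall>i<k. \<forall>hs x y a. length hs = k \<and> set hs \<subseteq> Hs s \<and> x \<in> Hs s \<and> y \<in> Hs s \<longrightarrow>
         T (hs[i := fadd x y]) = fadd (T (hs[i := x])) (T (hs[i := y])) \<and>
         T (hs[i := fscale a x]) = fscale a (T (hs[i := x]))) \<and>
     (\<exists>C. \<forall>hs. length hs = k \<and> set hs \<subseteq> Hs s \<longrightarrow>
         Hs_norm s (T hs) \<le> C * prod_list (map (Hs_norm s) hs))"

text \<open>(Real-Frechet) C^infinity maps H^s \<rightarrow> H^s: there are bounded multilinear maps D k w
  (the k-th derivative at w) such that D 0 w [] = G w and D (k+1) w is the Frechet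
  derivative of w \<mapsto> D k w, uniformly w.r.t. the multilinear operator norm.\<close>
definition smooth_Hs :: "real \<Rightarrow> (fseq \<Rightarrow> fseq) \<Rightarrow> bool" where
  "smooth_Hs s G \<longleftrightarrow>
     (\<exists>D :: nat \<Rightarrow> fseq \<Rightarrow> fseq list \<Rightarrow> fseq.
        (\<forall>w\<in>Hs s. D 0 w [] = G w) \<and>
        (\<forall>k. \<forall>w\<in>Hs s. multilin_bounded s k (D k w)) \<and>
        (\<forall>k. \<forall>w\<in>Hs s. \<forall>\<epsilon>>0. \<exists>\<delta>>0. \<forall>h\<in>Hs s. Hs_norm s h < \<delta> \<longrightarrow>
           (\<forall>hs. length hs = k \<and> set hs \<subseteq> Hs s \<longrightarrow>
              Hs_norm s (fdiff (fdiff (D k (fadd w h) hs) (D k w hs)) (D (Suc k) w (h # hs)))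
                \<le> \<epsilon> * Hs_norm s h * prod_list (map (Hs_norm s) hs))))"

end

theory Submission
  imports Defs "HOL-Analysis.Kronecker_Approximation_Theorem"
begin


lemma W_pos: "Hs_weight s n > 0"
proof -
  have "0 \<le> (real_of_int \<bar>n\<bar>)^2" by simp
  hence "(real_of_int \<bar>n\<bar>)^2 + 1 \<noteq> 0" by linarith
  then show ?thesis unfolding Hs_weight_def by simp
qed

lemma W_ge1: "s \<ge> 0 \<Longrightarrow> Hs_weight s n \<ge> 1"
  unfolding Hs_weight_def by (simp add: ge_one_powr_ge_zero)

lemma W_neg[simp]: "Hs_weight s (- n) = Hs_weight s n"
  unfolding Hs_weight_def by simp

lemma W_sub:
  assumes "s \<ge> 0"
  shows "Hs_weight s n \<le> 4 powr s * (Hs_weight s m + Hs_weight s (n - m))"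
proof -
  define a where "a = (real_of_int \<bar>m\<bar>)^2 + 1"
  define b where "b = (real_of_int \<bar>n - m\<bar>)^2 + 1"
  define c where "c = (real_of_int \<bar>n\<bar>)^2 + 1"
  have ab: "a \<ge> 1" "b \<ge> 1" unfolding a_def b_def by auto
  have "c \<le> 4 * max a b"
  proof -
      have "(real_of_int n)^2 \<le> 2*(real_of_int m)^2 + 2*(real_of_int (n-m))^2"
    proof -
      have "0 \<le> (real_of_int m - real_of_int (n-m))^2" by simp
      then show ?thesis by (simp add: power2_eq_square algebra_simps)
    qed
    hence "c \<le> 2*a + 2*b" unfolding a_def b_def c_def by (simp add: power2_abs)
    then show ?thesis by (simp add: max_def)
  qed
  hence "c powr s \<le> (4 * max a b) powr s"
    using ab assms by (intro powr_mono2) (auto simp: c_def)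
  also have "\<dots> = 4 powr s * max a b powr s" using ab by (simp add: powr_mult)
  also have "max a b powr s \<le> a powr s + b powr s"
    by (auto simp: max_def)
  finally have "c powr s \<le> 4 powr s * (a powr s + b powr s)"
    by (simp add: mult_left_mono)
  then show ?thesis unfolding Hs_weight_def a_def b_def c_def .
qed

lemma summable_nat_powr:
  assumes "s > 1/2"
  shows "summable (\<lambda>k::nat. 1 / Hs_weight s (int k))"
proof -
  have "summable (\<lambda>k::nat. (real k) powr (- (2 * s)))"
    using assms by (simp add: summable_real_powr_iff)
  then show ?thesis
  proof (rule summable_comparison_test'[where N=1])
    fix k :: nat assume "k \<ge> 1"
    hence k: "real k \<ge> 1" by simp
    have "norm (1 / Hs_weight s (int k)) = 1 / ((real k)^2 + 1) powr s"
      unfolding Hs_weight_def by simp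
    also have "\<dots> = ((real k)^2 + 1) powr (-s)"
      by (simp add: powr_minus divide_inverse)
    also have "\<dots> \<le> ((real k)^2) powr (-s)"
      using k assms by (intro powr_mono2') auto
    also have "\<dots> = (real k) powr (- (2 * s))"
      using powr_powr[of "real k" 2 "-s"] by simp
    finally show "norm (1 / Hs_weight s (int k)) \<le> (real k) powr (- (2 * s))" .
  qed
qed

lemma invW_summable:
  assumes "s > 1/2"
  shows "(\<lambda>n. 1 / Hs_weight s n) summable_on UNIV"
proof -
  have "(\<lambda>k::nat. 1 / Hs_weight s (int k)) summable_on UNIV"
    using summable_nat_powr[OF assms] by (intro summable_nonneg_imp_summable_on) (auto simp: W_pos less_imp_le)
  hence A: "(\<lambda>n. 1 / Hs_weight s n) summable_on range int"
    by (subst summable_on_reindex) (auto simp: o_def)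
  have "(\<lambda>k::nat. 1 / Hs_weight s (- int k)) summable_on UNIV"
    using summable_nat_powr[OF assms] by (intro summable_nonneg_imp_summable_on) (auto simp: W_pos less_imp_le)
  hence B: "(\<lambda>n. 1 / Hs_weight s n) summable_on range (\<lambda>k. - int k)"
    by (subst summable_on_reindex) (auto simp: o_def inj_def)
  have "UNIV = range int \<union> range (\<lambda>k. - int k)"
  proof -
    { fix x :: int have "x \<in> range int \<union> range (\<lambda>k. - int k)"
      proof (cases "x \<ge> 0")
        case True then show ?thesis by (metis UnI1 nonneg_int_cases rangeI)
      next
        case False then have "x = - int (nat (-x))" by simp
        then show ?thesis by blast
      qed }
    then show ?thesis by blast
  qed
  then show ?thesis using summable_on_union[OF A B] by simp
qed

lemma cs_infsum:
  fixes a b :: "'x \<Rightarrow> real"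
  assumes nn: "\<And>i. i \<in> A \<Longrightarrow> a i \<ge> 0" "\<And>i. i \<in> A \<Longrightarrow> b i \<ge> 0"
    and sa: "(\<lambda>i. (a i)^2) summable_on A" and sb: "(\<lambda>i. (b i)^2) summable_on A"
  shows "(\<lambda>i. a i * b i) summable_on A"
    and "(infsum (\<lambda>i. a i * b i) A)^2 \<le> infsum (\<lambda>i. (a i)^2) A * infsum (\<lambda>i. (b i)^2) A"
proof -
  have s2: "(\<lambda>i. (a i)^2 + (b i)^2) summable_on A" using sa sb by (rule summable_on_add)
  show sab: "(\<lambda>i. a i * b i) summable_on A"
  proof (rule summable_on_comparison_test[OF s2])
    fix i assume "i \<in> A"
    show "a i * b i \<le> (a i)^2 + (b i)^2"
    proof -
      have "0 \<le> (a i - b i)^2" by simp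
      hence "2 * (a i * b i) \<le> (a i)^2 + (b i)^2" by (simp add: power2_diff)
      moreover have "0 \<le> a i * b i" using nn[OF \<open>i\<in>A\<close>] by simp
      ultimately show ?thesis by linarith
    qed
    show "0 \<le> a i * b i" using nn[OF \<open>i\<in>A\<close>] by simp
  qed
  have "infsum (\<lambda>i. a i * b i) A \<le> sqrt (infsum (\<lambda>i. (a i)^2) A) * sqrt (infsum (\<lambda>i. (b i)^2) A)"
  proof (rule infsum_le_finite_sums[OF sab])
    fix F assume F: "finite F" "F \<subseteq> A"
    have "sum (\<lambda>i. a i * b i) F = (\<Sum>i\<in>F. \<bar>a i\<bar> * \<bar>b i\<bar>)"
      using F nn by (intro sum.cong) auto
    also have "\<dots> \<le> L2_set a F * L2_set b F" by (rule L2_set_mult_ineq)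
    also have "\<dots> \<le> sqrt (infsum (\<lambda>i. (a i)^2) A) * sqrt (infsum (\<lambda>i. (b i)^2) A)"
    proof (rule mult_mono)
      show "L2_set a F \<le> sqrt (infsum (\<lambda>i. (a i)^2) A)"
        unfolding L2_set_def using F by (intro real_sqrt_le_mono finite_sum_le_infsum sa) auto
      show "L2_set b F \<le> sqrt (infsum (\<lambda>i. (b i)^2) A)"
        unfolding L2_set_def using F by (intro real_sqrt_le_mono finite_sum_le_infsum sb) auto
      show "0 \<le> sqrt (infsum (\<lambda>i. (a i)^2) A)" by (auto intro: infsum_nonneg)
    qed simp
    finally show "sum (\<lambda>i. a i * b i) F \<le> sqrt (infsum (\<lambda>i. (a i)^2) A) * sqrt (infsum (\<lambda>i. (b i)^2) A)" .
  qed
  moreover have "0 \<le> infsum (\<lambda>i. a i * b i) A" using nn by (intro infsum_nonneg) auto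
  moreover have "0 \<le> infsum (\<lambda>i. (a i)^2) A" "0 \<le> infsum (\<lambda>i. (b i)^2) A" by (auto intro: infsum_nonneg)
  ultimately have "(infsum (\<lambda>i. a i * b i) A)^2 \<le> (sqrt (infsum (\<lambda>i. (a i)^2) A) * sqrt (infsum (\<lambda>i. (b i)^2) A))^2"
    by (intro power_mono) auto
  also have "\<dots> = infsum (\<lambda>i. (a i)^2) A * infsum (\<lambda>i. (b i)^2) A"
    using \<open>0 \<le> infsum (\<lambda>i. (a i)^2) A\<close> \<open>0 \<le> infsum (\<lambda>i. (b i)^2) A\<close>
    by (simp add: power_mult_distrib)
  finally show "(infsum (\<lambda>i. a i * b i) A)^2 \<le> infsum (\<lambda>i. (a i)^2) A * infsum (\<lambda>i. (b i)^2) A" .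
qed


definition N2 :: "real \<Rightarrow> fseq \<Rightarrow> real" where
  "N2 s v = (\<Sum>\<^sub>\<infinity>n\<in>UNIV. Hs_weight s n * (cmod (v n))^2)"

lemma Hs_norm_N2: "Hs_norm s v = sqrt (N2 s v)"
  by (simp add: Hs_norm_def N2_def)

lemma N2_nonneg: "N2 s v \<ge> 0"
  unfolding N2_def by (intro infsum_nonneg) (simp add: W_pos less_imp_le)

lemma Hs_norm_nonneg: "Hs_norm s v \<ge> 0"
  by (simp add: Hs_norm_N2 N2_nonneg)

lemma Hs_summ: "v \<in> Hs s \<Longrightarrow> (\<lambda>n. Hs_weight s n * (cmod (v n))^2) summable_on UNIV"
  by (simp add: Hs_def)

lemma term_le_infsum:
  fixes f :: "'a \<Rightarrow> real"
  assumes "f summable_on UNIV" "\<And>x. f x \<ge> 0"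
  shows "f x \<le> infsum f UNIV"
  using finite_sum_le_infsum[OF assms(1), of "{x}"] assms(2) by simp

lemma term_le_N2: "v \<in> Hs s \<Longrightarrow> Hs_weight s n * (cmod (v n))^2 \<le> N2 s v"
  unfolding N2_def by (rule term_le_infsum) (auto simp: Hs_def W_pos less_imp_le)

lemma Hs_l2:
  assumes "s \<ge> 0" "v \<in> Hs s"
  shows "(\<lambda>n. (cmod (v n))^2) summable_on UNIV"
proof (rule summable_on_comparison_test[OF Hs_summ[OF assms(2)]])
  fix n show "(cmod (v n))^2 \<le> Hs_weight s n * (cmod (v n))^2"
    using W_ge1[OF assms(1), of n] by (simp add: mult_le_cancel_right1)
qed simp

lemma Hnorm2_le_N2:
  assumes "s \<ge> 0" "v \<in> Hs s"
  shows "H_norm2 v \<le> N2 s v"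
  unfolding H_norm2_def N2_def
proof (rule infsum_mono[OF Hs_l2[OF assms] Hs_summ[OF assms(2)]])
  fix n show "(cmod (v n))^2 \<le> Hs_weight s n * (cmod (v n))^2"
    using W_ge1[OF assms(1), of n] by (simp add: mult_le_cancel_right1)
qed

lemma bij_minus: "bij_betw (\<lambda>m::int. k - m) UNIV UNIV"
  by (rule bij_betwI[where g="\<lambda>m. k - m"]) auto

lemma bij_uminus: "bij_betw (\<lambda>m::int. - m) UNIV UNIV"
  by (rule bij_betwI[where g="\<lambda>m. - m"]) auto

lemma bij_plus: "bij_betw (\<lambda>m::int. m + k) UNIV UNIV"
  by (rule bij_betwI[where g="\<lambda>m. m - k"]) auto

lemma summable_shift: "f summable_on UNIV \<Longrightarrow> (\<lambda>m::int. f (k - m)) summable_on UNIV"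
  using summable_on_reindex_bij_betw[OF bij_minus, of f k] by simp

lemma infsum_shift: "infsum (\<lambda>m::int. f (k - m)) UNIV = infsum f UNIV"
  using infsum_reindex_bij_betw[OF bij_minus, of f k] by simp

lemma summable_uminus': "f summable_on UNIV \<Longrightarrow> (\<lambda>m::int. f (- m)) summable_on UNIV"
  using summable_on_reindex_bij_betw[OF bij_uminus, of f] by simp

lemma infsum_uminus': "infsum (\<lambda>m::int. f (- m)) UNIV = infsum f UNIV"
  using infsum_reindex_bij_betw[OF bij_uminus, of f] by simp

lemma has_sum_plus: "(f has_sum a) UNIV \<Longrightarrow> ((\<lambda>m::int. f (m + k)) has_sum a) UNIV"
  using has_sum_reindex_bij_betw[OF bij_plus, of f k] by simp

definition l2 :: "fseq \<Rightarrow> bool" where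
  "l2 v \<longleftrightarrow> (\<lambda>n. (cmod (v n))^2) summable_on UNIV"

lemma Hs_imp_l2: "s \<ge> 0 \<Longrightarrow> v \<in> Hs s \<Longrightarrow> l2 v"
  using Hs_l2 l2_def by blast

lemma conv_abs_summable:
  assumes "l2 u" "l2 v"
  shows "(\<lambda>m. norm (u m * v (n - m))) summable_on UNIV"
proof -
  have "(\<lambda>m. cmod (u m) * cmod (v (n - m))) summable_on UNIV"
    by (rule cs_infsum(1)) (use assms in \<open>auto simp: l2_def intro: summable_shift[where f="\<lambda>n. (cmod (v n))^2"]\<close>)
  then show ?thesis by (simp add: norm_mult)
qed

lemma conv_summable:
  assumes "l2 u" "l2 v"
  shows "(\<lambda>m. u m * v (n - m)) summable_on UNIV"
  using abs_summable_summable[OF conv_abs_summable[OF assms]] .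

lemma conv_norm_le:
  assumes "l2 u" "l2 v"
  shows "cmod (fmult u v n) \<le> (\<Sum>\<^sub>\<infinity>m. cmod (u m) * cmod (v (n - m)))"
  unfolding fmult_def using norm_infsum_bound[OF conv_abs_summable[OF assms, of n]]
  by (simp add: norm_mult)

lemma fmult_add_left:
  assumes "l2 x" "l2 y" "l2 v"
  shows "fmult (fadd x y) v = fadd (fmult x v) (fmult y v)"
  unfolding fmult_def fadd_def
  by (rule ext, subst infsum_add[symmetric]) (auto intro!: conv_summable assms simp: distrib_right)

lemma fmult_add_right:
  assumes "l2 x" "l2 y" "l2 u"
  shows "fmult u (fadd x y) = fadd (fmult u x) (fmult u y)"
  unfolding fmult_def fadd_def
  by (rule ext, subst infsum_add[symmetric]) (auto intro!: conv_summable assms simp: distrib_left)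

lemma fmult_scale_left: "fmult (fscale a x) v = fscale a (fmult x v)"
  unfolding fmult_def fscale_def
  by (rule ext) (simp add: mult.assoc infsum_cmult_right')

lemma fmult_scale_right: "fmult u (fscale a x) = fscale a (fmult u x)"
  unfolding fmult_def fscale_def
  by (rule ext) (simp add: mult.left_commute infsum_cmult_right')


lemma has_sum_minus_shift: "(f has_sum a) UNIV \<Longrightarrow> ((\<lambda>n::int. f (n - k)) has_sum a) UNIV"
  using has_sum_plus[of f a "-k"] by simp

lemma infsum_minus_shift: "infsum (\<lambda>n::int. f (n - k)) UNIV = infsum f UNIV"
proof -
  have "bij_betw (\<lambda>n::int. n - k) UNIV UNIV" by (rule bij_betwI[where g="\<lambda>m. m + k"]) auto
  from infsum_reindex_bij_betw[OF this, of f] show ?thesis by simp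
qed

definition Sw :: "real \<Rightarrow> real" where "Sw s = (\<Sum>\<^sub>\<infinity>n\<in>UNIV. 1 / Hs_weight s n)"
definition K2 :: "real \<Rightarrow> real" where "K2 s = 2 * 4 powr s * Sw s"

lemma Sw_nonneg: "Sw s \<ge> 0" unfolding Sw_def by (intro infsum_nonneg) (simp add: W_pos less_imp_le)
lemma K2_nonneg: "K2 s \<ge> 0" unfolding K2_def using Sw_nonneg by simp

lemma frac_ineq:
  fixes a b c d :: real
  assumes "a > 0" "b > 0" "d > 0" "d \<le> c * (a + b)"
  shows "1 / (a * b) \<le> c / d * (1 / b + 1 / a)"
proof -
  have "1 / (a * b) = d / (d * a * b)" using assms by simp
  also have "\<dots> \<le> c * (a + b) / (d * a * b)"
    using assms by (intro divide_right_mono) auto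
  also have "\<dots> = c / d * (1 / b + 1 / a)" using assms by (simp add: field_simps)
  finally show ?thesis .
qed

lemma algebra_estimate:
  assumes s: "s > 1/2" and u: "u \<in> Hs s" and v: "v \<in> Hs s"
  shows "fmult u v \<in> Hs s" and "N2 s (fmult u v) \<le> K2 s * N2 s u * N2 s v"
proof -
  have s0: "s \<ge> 0" using s by simp
  define W where "W = Hs_weight s"
  have Wp: "\<And>n. W n > 0" by (simp add: W_def W_pos)
  define g where "g = (\<lambda>m. W m * (cmod (u m))^2)"
  define h where "h = (\<lambda>m. W m * (cmod (v m))^2)"
  define G where "G = N2 s u"
  define H where "H = N2 s v"
  have gs: "g summable_on UNIV" using u by (simp add: g_def W_def Hs_def)
  have hs: "h summable_on UNIV" using v by (simp add: h_def W_def Hs_def)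
  have gn: "\<And>m. g m \<ge> 0" and hn: "\<And>m. h m \<ge> 0" using Wp by (auto simp: g_def h_def less_imp_le)
  have hH: "(h has_sum H) UNIV" using hs by (simp add: H_def N2_def h_def W_def has_sum_infsum)
  have gG: "infsum g UNIV = G" by (simp add: G_def N2_def g_def W_def)
  have hle: "\<And>m. h m \<le> H" unfolding h_def H_def W_def by (rule term_le_N2[OF v])
  have sumA: "(\<lambda>(m,n). g m * h (n - m)) summable_on (UNIV \<times> UNIV)"
  proof (rule summable_on_SigmaI[where g="\<lambda>m. g m * H"])
    fix m :: int
    show "((\<lambda>n. case (m, n) of (m, n) \<Rightarrow> g m * h (n - m)) has_sum g m * H) UNIV"
      using has_sum_cmult_right[OF has_sum_minus_shift[OF hH, of m], of "g m"] by simp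
  next
    show "(\<lambda>m. g m * H) summable_on UNIV" using gs by (rule summable_on_cmult_left)
  qed (use gn hn in \<open>auto intro: mult_nonneg_nonneg\<close>)
  define P where "P = (\<lambda>n. infsum (\<lambda>m. g m * h (n - m)) UNIV)"
  have sumB: "(\<lambda>(n,m). g m * h (n - m)) summable_on (UNIV \<times> UNIV)"
    using sumA by (subst summable_on_swap) (simp add: case_prod_unfold)
  have Ps: "P summable_on UNIV"
    unfolding P_def using summable_on_Sigma_banach[of "\<lambda>n m. g m * h (n - m)" UNIV "\<lambda>_. UNIV"] sumB
    by simp
  have PG: "infsum P UNIV = G * H"
  proof -
    have "infsum P UNIV = infsum (\<lambda>m. infsum (\<lambda>n. g m * h (n - m)) UNIV) UNIV"
      unfolding P_def using infsum_swap_banach[of "\<lambda>m n. g m * h (n - m)" UNIV UNIV] sumA by simp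
    also have "\<dots> = infsum (\<lambda>m. g m * H) UNIV"
      using hH by (simp add: infsum_cmult_right' infsum_minus_shift infsumI)
    also have "\<dots> = G * H" by (simp add: infsum_cmult_left' gG)
    finally show ?thesis .
  qed
  have ptw: "W n * (cmod (fmult u v n))^2 \<le> K2 s * P n" for n
  proof -
    have lu: "l2 u" "l2 v" using u v s0 by (auto intro: Hs_imp_l2)
    define a where "a m = sqrt (W m * W (n - m)) * (cmod (u m) * cmod (v (n - m)))" for m
    define b where "b m = 1 / sqrt (W m * W (n - m))" for m
    have ab: "a m * b m = cmod (u m) * cmod (v (n - m))" for m
      using Wp[of m] Wp[of "n-m"] by (simp add: a_def b_def)
    have a2: "(a m)^2 = g m * h (n - m)" for m
      using Wp[of m] Wp[of "n-m"] by (simp add: a_def g_def h_def power_mult_distrib)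
    have b2: "(b m)^2 = 1 / (W m * W (n - m))" for m
      using Wp[of m] Wp[of "n-m"] by (simp add: b_def power_divide)
    have bbound: "(b m)^2 \<le> 4 powr s / W n * (1 / W (n - m) + 1 / W m)" for m
      unfolding b2 by (rule frac_ineq) (use Wp W_sub[OF s0, of n m] in \<open>auto simp: W_def\<close>)
    have invs: "(\<lambda>m. 1 / W m) summable_on UNIV" using invW_summable[OF s] by (simp add: W_def)
    have invs2: "(\<lambda>m. 1 / W (n - m)) summable_on UNIV" using summable_shift[OF invs] .
    have invsum: "(\<lambda>m. 4 powr s / W n * (1 / W (n - m) + 1 / W m)) summable_on UNIV"
      by (intro summable_on_cmult_right summable_on_add invs invs2)
    have sa: "(\<lambda>m. (a m)^2) summable_on UNIV"
      unfolding a2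
    proof (rule summable_on_comparison_test[where f="\<lambda>m. g m * H"])
      show "(\<lambda>m. g m * H) summable_on UNIV" using gs by (rule summable_on_cmult_left)
    qed (use gn hn hle in \<open>auto intro: mult_left_mono mult_nonneg_nonneg\<close>)
    have sb: "(\<lambda>m. (b m)^2) summable_on UNIV"
      by (rule summable_on_comparison_test[OF invsum bbound]) simp
    have an: "a m \<ge> 0" "b m \<ge> 0" for m using Wp[of m] Wp[of "n-m"] by (auto simp: a_def b_def)
    have Bb: "infsum (\<lambda>m. (b m)^2) UNIV \<le> 4 powr s / W n * (2 * Sw s)"
    proof -
      have "infsum (\<lambda>m. (b m)^2) UNIV \<le> infsum (\<lambda>m. 4 powr s / W n * (1 / W (n - m) + 1 / W m)) UNIV"
        by (rule infsum_mono[OF sb invsum bbound])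
      also have "\<dots> = 4 powr s / W n * (infsum (\<lambda>m. 1 / W (n - m)) UNIV + infsum (\<lambda>m. 1 / W m) UNIV)"
        by (simp only: infsum_cmult_right' infsum_add[OF invs2 invs])
      also have "\<dots> = 4 powr s / W n * (2 * Sw s)"
        using infsum_shift[of "\<lambda>m. 1 / W m" n] by (simp add: Sw_def W_def)
      finally show ?thesis .
    qed
    have "cmod (fmult u v n) \<le> infsum (\<lambda>m. a m * b m) UNIV"
      using conv_norm_le[OF lu, of n] by (simp add: ab)
    hence "(cmod (fmult u v n))^2 \<le> (infsum (\<lambda>m. a m * b m) UNIV)^2"
      by (intro power_mono) auto
    also have "\<dots> \<le> infsum (\<lambda>m. (a m)^2) UNIV * infsum (\<lambda>m. (b m)^2) UNIV"
      by (rule cs_infsum(2)[OF an sa sb])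
    also have "\<dots> = P n * infsum (\<lambda>m. (b m)^2) UNIV"
      by (simp add: a2 P_def)
    also have "\<dots> \<le> P n * (4 powr s / W n * (2 * Sw s))"
    proof (rule mult_left_mono[OF Bb])
      show "0 \<le> P n" unfolding P_def by (intro infsum_nonneg) (use gn hn in \<open>auto intro: mult_nonneg_nonneg\<close>)
    qed
    finally have "(cmod (fmult u v n))^2 \<le> P n * (4 powr s / W n * (2 * Sw s))" .
    hence "W n * (cmod (fmult u v n))^2 \<le> W n * (P n * (4 powr s / W n * (2 * Sw s)))"
      using Wp[of n] by (intro mult_left_mono) auto
    also have "\<dots> = K2 s * P n" using Wp[of n] by (simp add: K2_def field_simps)
    finally show ?thesis .
  qed
  have Pn: "P n \<ge> 0" for n unfolding P_def by (intro infsum_nonneg) (use gn hn in \<open>auto intro: mult_nonneg_nonneg\<close>)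
  have KP: "(\<lambda>n. K2 s * P n) summable_on UNIV" using Ps by (rule summable_on_cmult_right)
  have fs: "(\<lambda>n. W n * (cmod (fmult u v n))^2) summable_on UNIV"
    by (rule summable_on_comparison_test[OF KP ptw]) (simp add: Wp less_imp_le)
  then show "fmult u v \<in> Hs s" by (simp add: Hs_def W_def)
  have "N2 s (fmult u v) \<le> infsum (\<lambda>n. K2 s * P n) UNIV"
    unfolding N2_def W_def[symmetric] by (rule infsum_mono[OF fs KP ptw])
  also have "\<dots> = K2 s * G * H" by (simp add: infsum_cmult_right' PG)
  finally show "N2 s (fmult u v) \<le> K2 s * N2 s u * N2 s v" by (simp add: G_def H_def)
qed


lemma cmod_expi: "cmod (exp (- \<i> * of_int k * of_real t)) = 1"
  by (simp add: norm_exp_eq_Re)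

lemma W_nonneg[simp]: "0 \<le> Hs_weight s n" using W_pos[of s n] by simp
lemma wterm_nonneg[simp]: "0 \<le> Hs_weight s n * (cmod z)^2" by simp

lemma sq_sum_le: "((a::real) + b)^2 \<le> 2 * a^2 + 2 * b^2"
proof -
  have "0 \<le> (a - b)^2" by simp
  then show ?thesis by (simp add: power2_sum power2_diff)
qed

lemma cmod_add_sq: "(cmod (x + y))^2 \<le> 2 * (cmod x)^2 + 2 * (cmod y)^2"
proof -
  have "(cmod (x + y))^2 \<le> (cmod x + cmod y)^2"
    by (intro power_mono norm_triangle_ineq) simp
  also have "\<dots> \<le> 2 * (cmod x)^2 + 2 * (cmod y)^2" by (rule sq_sum_le)
  finally show ?thesis .
qed

lemma Hs_fadd:
  assumes "x \<in> Hs s" "y \<in> Hs s"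
  shows "fadd x y \<in> Hs s"
proof -
  have "(\<lambda>n. 2 * (Hs_weight s n * (cmod (x n))^2) + 2 * (Hs_weight s n * (cmod (y n))^2)) summable_on UNIV"
    using assms by (intro summable_on_add summable_on_cmult_right) (auto simp: Hs_def)
  then have "(\<lambda>n. Hs_weight s n * (cmod (x n + y n))^2) summable_on UNIV"
  proof (rule summable_on_comparison_test)
    fix n
    have "Hs_weight s n * (cmod (x n + y n))^2 \<le> Hs_weight s n * (2 * (cmod (x n))^2 + 2 * (cmod (y n))^2)"
      using W_pos[of s n] by (intro mult_left_mono cmod_add_sq) auto
    then show "Hs_weight s n * (cmod (x n + y n))^2 \<le> 2 * (Hs_weight s n * (cmod (x n))^2) + 2 * (Hs_weight s n * (cmod (y n))^2)"
      by (simp add: algebra_simps)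
    show "0 \<le> Hs_weight s n * (cmod (x n + y n))^2" using W_pos[of s n] by simp
  qed
  then show ?thesis by (simp add: Hs_def fadd_def)
qed

lemma Hs_norm_triangle:
  assumes x: "x \<in> Hs s" and y: "y \<in> Hs s"
  shows "Hs_norm s (fadd x y) \<le> Hs_norm s x + Hs_norm s y"
proof -
  define tx where "tx = (\<lambda>n. sqrt (Hs_weight s n) * cmod (x n))"
  define ty where "ty = (\<lambda>n. sqrt (Hs_weight s n) * cmod (y n))"
  have Wp: "\<And>n. Hs_weight s n > 0" by (rule W_pos)
  have txF: "L2_set tx F \<le> Hs_norm s x" if "finite F" for F
  proof -
    have "(\<Sum>i\<in>F. (tx i)^2) = (\<Sum>i\<in>F. Hs_weight s i * (cmod (x i))^2)"
      using Wp by (intro sum.cong) (auto simp: tx_def power_mult_distrib less_imp_le)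
    also have "\<dots> \<le> N2 s x" unfolding N2_def
      using that Wp by (intro finite_sum_le_infsum Hs_summ[OF x]) simp_all
    finally show ?thesis unfolding L2_set_def Hs_norm_N2 by (rule real_sqrt_le_mono)
  qed
  have tyF: "L2_set ty F \<le> Hs_norm s y" if "finite F" for F
  proof -
    have "(\<Sum>i\<in>F. (ty i)^2) = (\<Sum>i\<in>F. Hs_weight s i * (cmod (y i))^2)"
      using Wp by (intro sum.cong) (auto simp: ty_def power_mult_distrib less_imp_le)
    also have "\<dots> \<le> N2 s y" unfolding N2_def
      using that Wp by (intro finite_sum_le_infsum Hs_summ[OF y]) simp_all
    finally show ?thesis unfolding L2_set_def Hs_norm_N2 by (rule real_sqrt_le_mono)
  qed
  have "N2 s (fadd x y) \<le> (Hs_norm s x + Hs_norm s y)^2"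
    unfolding N2_def
  proof (rule infsum_le_finite_sums)
    show "(\<lambda>n. Hs_weight s n * (cmod (fadd x y n))^2) summable_on UNIV"
      using Hs_fadd[OF x y] by (simp add: Hs_def)
    fix F :: "int set" assume F: "finite F"
    have "(\<Sum>n\<in>F. Hs_weight s n * (cmod (fadd x y n))^2) \<le> (\<Sum>n\<in>F. (tx n + ty n)^2)"
    proof (rule sum_mono)
      fix n
      have "Hs_weight s n * (cmod (fadd x y n))^2 \<le> Hs_weight s n * (cmod (x n) + cmod (y n))^2"
        using Wp[of n] unfolding fadd_def by (intro mult_left_mono power_mono norm_triangle_ineq) auto
      also have "\<dots> = (tx n + ty n)^2"
        using Wp[of n] by (simp add: tx_def ty_def power2_eq_square algebra_simps)
      finally show "Hs_weight s n * (cmod (fadd x y n))^2 \<le> (tx n + ty n)^2" .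
    qed
    also have "\<dots> = (L2_set (\<lambda>n. tx n + ty n) F)^2"
      unfolding L2_set_def by (simp add: sum_nonneg)
    also have "\<dots> \<le> (L2_set tx F + L2_set ty F)^2"
      by (intro power_mono L2_set_triangle_ineq) simp
    also have "\<dots> \<le> (Hs_norm s x + Hs_norm s y)^2"
      by (intro power_mono add_mono txF tyF F) (simp add: add_nonneg_nonneg)
    finally show "(\<Sum>n\<in>F. Hs_weight s n * (cmod (fadd x y n))^2) \<le> (Hs_norm s x + Hs_norm s y)^2" .
  qed
  hence "sqrt (N2 s (fadd x y)) \<le> sqrt ((Hs_norm s x + Hs_norm s y)^2)"
    by (rule real_sqrt_le_mono)
  also have "\<dots> = Hs_norm s x + Hs_norm s y"
    by (simp add: Hs_norm_nonneg add_nonneg_nonneg)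
  finally show ?thesis by (simp add: Hs_norm_N2)
qed

lemma Hs_fscale:
  assumes "x \<in> Hs s"
  shows "fscale a x \<in> Hs s" and "Hs_norm s (fscale a x) = \<bar>a\<bar> * Hs_norm s x"
proof -
  have eq: "(\<lambda>n. Hs_weight s n * (cmod (fscale a x n))^2) = (\<lambda>n. a^2 * (Hs_weight s n * (cmod (x n))^2))"
    by (auto simp: fscale_def norm_mult power_mult_distrib)
  have "(\<lambda>n. a^2 * (Hs_weight s n * (cmod (x n))^2)) summable_on UNIV"
    using assms by (intro summable_on_cmult_right) (simp add: Hs_def)
  then show "fscale a x \<in> Hs s" unfolding Hs_def mem_Collect_eq eq .
  show "Hs_norm s (fscale a x) = \<bar>a\<bar> * Hs_norm s x"
    unfolding Hs_norm_def eq infsum_cmult_right' by (simp add: real_sqrt_mult)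
qed

lemma H1_terms: "Hs_weight s n * (cmod (H1 t x n))^2 = Hs_weight s n * (cmod (x n))^2"
  by (simp add: H1_def norm_mult cmod_expi[of "n^3" t, simplified])

lemma Hs_H1: "x \<in> Hs s \<Longrightarrow> H1 t x \<in> Hs s"
  by (simp add: Hs_def H1_terms)

lemma Hs_norm_H1: "Hs_norm s (H1 t x) = Hs_norm s x"
  by (simp add: Hs_norm_def H1_terms)

lemma fconj_terms: "(\<lambda>n. Hs_weight s n * (cmod (fconj x n))^2) = (\<lambda>n. (\<lambda>n. Hs_weight s n * (cmod (x n))^2) (- n))"
  by (simp add: fconj_def)

lemma Hs_fconj: "x \<in> Hs s \<Longrightarrow> fconj x \<in> Hs s"
  unfolding Hs_def mem_Collect_eq fconj_terms by (rule summable_uminus')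

lemma Hs_norm_fconj: "Hs_norm s (fconj x) = Hs_norm s x"
  using infsum_uminus'[of "\<lambda>n. Hs_weight s n * (cmod (x n))^2"] by (simp add: Hs_norm_def fconj_def)

definition fzero :: fseq where "fzero = (\<lambda>n. 0)"

lemma Hs_zero: "fzero \<in> Hs s" and Hs_norm_zero: "Hs_norm s fzero = 0"
  by (simp_all add: Hs_def Hs_norm_def fzero_def)

lemma Hs_fmult:
  assumes "s > 1/2" "u \<in> Hs s" "v \<in> Hs s"
  shows "fmult u v \<in> Hs s" and "Hs_norm s (fmult u v) \<le> sqrt (K2 s) * Hs_norm s u * Hs_norm s v"
proof -
  show "fmult u v \<in> Hs s" using algebra_estimate[OF assms] by simp
  have "sqrt (N2 s (fmult u v)) \<le> sqrt (K2 s * N2 s u * N2 s v)"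
    using algebra_estimate(2)[OF assms] by (rule real_sqrt_le_mono)
  then show "Hs_norm s (fmult u v) \<le> sqrt (K2 s) * Hs_norm s u * Hs_norm s v"
    by (simp add: Hs_norm_N2 real_sqrt_mult)
qed

lemma H1_add: "H1 t (fadd x y) = fadd (H1 t x) (H1 t y)"
  by (rule ext) (simp add: H1_def fadd_def distrib_left)
lemma H1_scale: "H1 t (fscale a x) = fscale a (H1 t x)"
  by (rule ext) (simp add: H1_def fscale_def mult.left_commute)
lemma fconj_add: "fconj (fadd x y) = fadd (fconj x) (fconj y)"
  by (rule ext) (simp add: fconj_def fadd_def)
lemma fconj_scale: "fconj (fscale a x) = fscale a (fconj x)"
  by (rule ext) (simp add: fconj_def fscale_def)

definition Bop :: "real \<Rightarrow> fseq \<Rightarrow> fseq \<Rightarrow> fseq \<Rightarrow> fseq" where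
  "Bop t a b c = H1 (- t) (fmult (H1 t a) (fmult (H1 t b) (fconj (H1 t c))))"

lemma Fnl_Bop: "Fnl t w = Bop t w w w"
  by (simp add: Fnl_def Bop_def Let_def)

context
  fixes s :: real
  assumes s: "s > 1/2"
begin

lemma s0: "s \<ge> 0" using s by simp

lemma l2I: "x \<in> Hs s \<Longrightarrow> l2 x" using Hs_imp_l2[OF s0] .

lemma inner_Hs: "b \<in> Hs s \<Longrightarrow> c \<in> Hs s \<Longrightarrow> fmult (H1 t b) (fconj (H1 t c)) \<in> Hs s"
  by (intro Hs_fmult(1)[OF s] Hs_H1 Hs_fconj)

lemma Bop_Hs: "a \<in> Hs s \<Longrightarrow> b \<in> Hs s \<Longrightarrow> c \<in> Hs s \<Longrightarrow> Bop t a b c \<in> Hs s"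
  unfolding Bop_def by (intro Hs_H1 Hs_fmult(1)[OF s] inner_Hs)

lemma Bop_norm:
  assumes "a \<in> Hs s" "b \<in> Hs s" "c \<in> Hs s"
  shows "Hs_norm s (Bop t a b c) \<le> K2 s * (Hs_norm s a * Hs_norm s b * Hs_norm s c)"
proof -
  have h1: "Hs_norm s (Bop t a b c) \<le> sqrt (K2 s) * Hs_norm s a * Hs_norm s (fmult (H1 t b) (fconj (H1 t c)))"
    using Hs_fmult(2)[OF s Hs_H1[OF assms(1)] inner_Hs[OF assms(2,3)], of t t]
    by (simp add: Bop_def Hs_norm_H1)
  have h2: "Hs_norm s (fmult (H1 t b) (fconj (H1 t c))) \<le> sqrt (K2 s) * Hs_norm s b * Hs_norm s c"
    using Hs_fmult(2)[OF s Hs_H1[OF assms(2)] Hs_fconj[OF Hs_H1[OF assms(3)]], of t t]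
    by (simp add: Hs_norm_H1 Hs_norm_fconj)
  have "sqrt (K2 s) * Hs_norm s a * Hs_norm s (fmult (H1 t b) (fconj (H1 t c))) \<le> sqrt (K2 s) * Hs_norm s a * (sqrt (K2 s) * Hs_norm s b * Hs_norm s c)"
    by (intro mult_left_mono h2 mult_nonneg_nonneg) (simp_all add: Hs_norm_nonneg K2_nonneg)
  also have "\<dots> = K2 s * (Hs_norm s a * Hs_norm s b * Hs_norm s c)"
    using K2_nonneg[of s] by (simp add: algebra_simps)
  finally show ?thesis using h1 by linarith
qed

lemma Bop_add1:
  assumes "a \<in> Hs s" "a' \<in> Hs s" "b \<in> Hs s" "c \<in> Hs s"
  shows "Bop t (fadd a a') b c = fadd (Bop t a b c) (Bop t a' b c)"
  unfolding Bop_def H1_add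
  by (subst fmult_add_left) (auto intro!: l2I Hs_H1 inner_Hs assms simp: H1_add)

lemma Bop_add2:
  assumes "a \<in> Hs s" "b \<in> Hs s" "b' \<in> Hs s" "c \<in> Hs s"
  shows "Bop t a (fadd b b') c = fadd (Bop t a b c) (Bop t a b' c)"
  unfolding Bop_def H1_add
  by (subst fmult_add_left, (auto intro!: l2I Hs_H1 Hs_fconj assms)[3],
      subst fmult_add_right, (auto intro!: l2I Hs_H1 Hs_fconj inner_Hs assms)[3]) (simp add: H1_add)

lemma Bop_add3:
  assumes "a \<in> Hs s" "b \<in> Hs s" "c \<in> Hs s" "c' \<in> Hs s"
  shows "Bop t a b (fadd c c') = fadd (Bop t a b c) (Bop t a b c')"
  unfolding Bop_def H1_add fconj_add
  by (subst fmult_add_right, (auto intro!: l2I Hs_H1 Hs_fconj assms)[3],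
      subst fmult_add_right, (auto intro!: l2I Hs_H1 Hs_fconj inner_Hs assms)[3]) (simp add: H1_add)

end

lemma Bop_scale1: "Bop t (fscale r a) b c = fscale r (Bop t a b c)"
  by (simp add: Bop_def H1_scale fmult_scale_left)
lemma Bop_scale2: "Bop t a (fscale r b) c = fscale r (Bop t a b c)"
  by (simp add: Bop_def H1_scale fmult_scale_left fmult_scale_right)
lemma Bop_scale3: "Bop t a b (fscale r c) = fscale r (Bop t a b c)"
  by (simp add: Bop_def H1_scale fconj_scale fmult_scale_right)


definition S1 :: "real \<Rightarrow> fseq \<Rightarrow> fseq \<Rightarrow> fseq" where
  "S1 t w h = fadd (fadd (Bop t h w w) (Bop t w h w)) (Bop t w w h)"
definition S2 :: "real \<Rightarrow> fseq \<Rightarrow> fseq \<Rightarrow> fseq \<Rightarrow> fseq" where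
  "S2 t w h1 h2 = fadd (fadd (fadd (Bop t h1 h2 w) (Bop t h2 h1 w)) (fadd (Bop t h1 w h2) (Bop t h2 w h1)))
                       (fadd (Bop t w h1 h2) (Bop t w h2 h1))"
definition S3 :: "real \<Rightarrow> fseq \<Rightarrow> fseq \<Rightarrow> fseq \<Rightarrow> fseq" where
  "S3 t h1 h2 h3 = fadd (fadd (fadd (Bop t h1 h2 h3) (Bop t h2 h1 h3)) (fadd (Bop t h1 h3 h2) (Bop t h2 h3 h1)))
                        (fadd (Bop t h3 h1 h2) (Bop t h3 h2 h1))"

definition Dk :: "real \<Rightarrow> nat \<Rightarrow> fseq \<Rightarrow> fseq list \<Rightarrow> fseq" where
  "Dk t k w hs = (if k = 0 then Bop t w w w else if k = 1 then S1 t w (hs!0)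
     else if k = 2 then S2 t w (hs!0) (hs!1) else if k = 3 then S3 t (hs!0) (hs!1) (hs!2) else fzero)"

lemma fadd_fzero[simp]: "fadd fzero fzero = fzero" by (simp add: fadd_def fzero_def)
lemma fscale_fzero[simp]: "fscale a fzero = fzero" by (simp add: fscale_def fzero_def)

lemma list1: "length xs = 1 \<Longrightarrow> xs = [xs!0]" by (cases xs) auto
lemma list2: "length xs = 2 \<Longrightarrow> xs = [xs!0, xs!1]" by (cases xs; cases "tl xs") auto
lemma list3: "length xs = 3 \<Longrightarrow> xs = [xs!0, xs!1, xs!2]"
  by (cases xs; cases "tl xs"; cases "tl (tl xs)") auto

lemma nth_Hs: "set hs \<subseteq> Hs s \<Longrightarrow> i < length hs \<Longrightarrow> hs ! i \<in> Hs s"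
  using nth_mem by blast

context
  fixes s :: real
  assumes s: "s > 1/2"
begin

lemmas Badd = Bop_add1[OF s] Bop_add2[OF s] Bop_add3[OF s]
lemmas Bsc = Bop_scale1 Bop_scale2 Bop_scale3
lemmas BHs = Bop_Hs[OF s]

lemma norm_add_le:
  "x \<in> Hs s \<Longrightarrow> y \<in> Hs s \<Longrightarrow> Hs_norm s x \<le> A \<Longrightarrow> Hs_norm s y \<le> B \<Longrightarrow> Hs_norm s (fadd x y) \<le> A + B"
  using Hs_norm_triangle[of x s y] by linarith

lemma S1_Hs: "w \<in> Hs s \<Longrightarrow> h \<in> Hs s \<Longrightarrow> S1 t w h \<in> Hs s"
  by (simp add: S1_def Hs_fadd BHs)
lemma S2_Hs: "w \<in> Hs s \<Longrightarrow> h1 \<in> Hs s \<Longrightarrow> h2 \<in> Hs s \<Longrightarrow> S2 t w h1 h2 \<in> Hs s"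
  by (simp add: S2_def Hs_fadd BHs)
lemma S3_Hs: "h1 \<in> Hs s \<Longrightarrow> h2 \<in> Hs s \<Longrightarrow> h3 \<in> Hs s \<Longrightarrow> S3 t h1 h2 h3 \<in> Hs s"
  by (simp add: S3_def Hs_fadd BHs)

lemma S1_add: "w \<in> Hs s \<Longrightarrow> x \<in> Hs s \<Longrightarrow> y \<in> Hs s \<Longrightarrow> S1 t w (fadd x y) = fadd (S1 t w x) (S1 t w y)"
  by (simp add: S1_def Badd) (rule ext, simp add: fadd_def algebra_simps)
lemma S1_sc: "S1 t w (fscale a x) = fscale a (S1 t w x)"
  by (simp add: S1_def Bsc) (rule ext, simp add: fadd_def fscale_def algebra_simps)

lemma S2_add1: "w \<in> Hs s \<Longrightarrow> x \<in> Hs s \<Longrightarrow> y \<in> Hs s \<Longrightarrow> h \<in> Hs s \<Longrightarrow>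
    S2 t w (fadd x y) h = fadd (S2 t w x h) (S2 t w y h)"
  by (simp add: S2_def Badd) (rule ext, simp add: fadd_def algebra_simps)
lemma S2_add2: "w \<in> Hs s \<Longrightarrow> x \<in> Hs s \<Longrightarrow> y \<in> Hs s \<Longrightarrow> h \<in> Hs s \<Longrightarrow>
    S2 t w h (fadd x y) = fadd (S2 t w h x) (S2 t w h y)"
  by (simp add: S2_def Badd) (rule ext, simp add: fadd_def algebra_simps)
lemma S2_sc1: "S2 t w (fscale a x) h = fscale a (S2 t w x h)"
  by (simp add: S2_def Bsc) (rule ext, simp add: fadd_def fscale_def algebra_simps)
lemma S2_sc2: "S2 t w h (fscale a x) = fscale a (S2 t w h x)"
  by (simp add: S2_def Bsc) (rule ext, simp add: fadd_def fscale_def algebra_simps)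

lemma S3_add1: "x \<in> Hs s \<Longrightarrow> y \<in> Hs s \<Longrightarrow> h \<in> Hs s \<Longrightarrow> g \<in> Hs s \<Longrightarrow>
    S3 t (fadd x y) h g = fadd (S3 t x h g) (S3 t y h g)"
  by (simp add: S3_def Badd) (rule ext, simp add: fadd_def algebra_simps)
lemma S3_add2: "x \<in> Hs s \<Longrightarrow> y \<in> Hs s \<Longrightarrow> h \<in> Hs s \<Longrightarrow> g \<in> Hs s \<Longrightarrow>
    S3 t h (fadd x y) g = fadd (S3 t h x g) (S3 t h y g)"
  by (simp add: S3_def Badd) (rule ext, simp add: fadd_def algebra_simps)
lemma S3_add3: "x \<in> Hs s \<Longrightarrow> y \<in> Hs s \<Longrightarrow> h \<in> Hs s \<Longrightarrow> g \<in> Hs s \<Longrightarrow>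
    S3 t h g (fadd x y) = fadd (S3 t h g x) (S3 t h g y)"
  by (simp add: S3_def Badd) (rule ext, simp add: fadd_def algebra_simps)
lemma S3_sc1: "S3 t (fscale a x) h g = fscale a (S3 t x h g)"
  by (simp add: S3_def Bsc) (rule ext, simp add: fadd_def fscale_def algebra_simps)
lemma S3_sc2: "S3 t h (fscale a x) g = fscale a (S3 t h x g)"
  by (simp add: S3_def Bsc) (rule ext, simp add: fadd_def fscale_def algebra_simps)
lemma S3_sc3: "S3 t h g (fscale a x) = fscale a (S3 t h g x)"
  by (simp add: S3_def Bsc) (rule ext, simp add: fadd_def fscale_def algebra_simps)

abbreviation "nm \<equiv> Hs_norm s"

lemma Bn: "a \<in> Hs s \<Longrightarrow> b \<in> Hs s \<Longrightarrow> c \<in> Hs s \<Longrightarrow> nm (Bop t a b c) \<le> K2 s * (nm a * nm b * nm c)"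
  by (rule Bop_norm[OF s])

lemma S1_norm: assumes "w \<in> Hs s" "h \<in> Hs s"
  shows "nm (S1 t w h) \<le> 3 * K2 s * (nm w)^2 * nm h"
proof -
  have "nm (S1 t w h) \<le> K2 s * (nm h * nm w * nm w) + K2 s * (nm w * nm h * nm w) + K2 s * (nm w * nm w * nm h)"
    unfolding S1_def using assms by (intro norm_add_le Hs_fadd BHs Bn) auto
  then show ?thesis by (simp add: power2_eq_square algebra_simps)
qed

lemma S2_norm: assumes "w \<in> Hs s" "h1 \<in> Hs s" "h2 \<in> Hs s"
  shows "nm (S2 t w h1 h2) \<le> 6 * K2 s * nm w * (nm h1 * nm h2)"
proof -
  have "nm (S2 t w h1 h2) \<le> K2 s * (nm h1 * nm h2 * nm w) + K2 s * (nm h2 * nm h1 * nm w)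
      + (K2 s * (nm h1 * nm w * nm h2) + K2 s * (nm h2 * nm w * nm h1))
      + (K2 s * (nm w * nm h1 * nm h2) + K2 s * (nm w * nm h2 * nm h1))"
    unfolding S2_def using assms by (intro norm_add_le Hs_fadd BHs Bn) auto
  then show ?thesis by (simp add: algebra_simps)
qed

lemma S3_norm: assumes "h1 \<in> Hs s" "h2 \<in> Hs s" "h3 \<in> Hs s"
  shows "nm (S3 t h1 h2 h3) \<le> 6 * K2 s * (nm h1 * (nm h2 * nm h3))"
proof -
  have "nm (S3 t h1 h2 h3) \<le> K2 s * (nm h1 * nm h2 * nm h3) + K2 s * (nm h2 * nm h1 * nm h3)
      + (K2 s * (nm h1 * nm h3 * nm h2) + K2 s * (nm h2 * nm h3 * nm h1))
      + (K2 s * (nm h3 * nm h1 * nm h2) + K2 s * (nm h3 * nm h2 * nm h1))"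
    unfolding S3_def using assms by (intro norm_add_le Hs_fadd BHs Bn) auto
  then show ?thesis by (simp add: algebra_simps)
qed

lemma ml0: "w \<in> Hs s \<Longrightarrow> multilin_bounded s 0 (Dk t 0 w)"
  unfolding multilin_bounded_def Dk_def
  by (auto simp: BHs intro!: exI[where x="nm (Bop t w w w)"])

lemma ml1: assumes w: "w \<in> Hs s" shows "multilin_bounded s 1 (Dk t 1 w)"
  unfolding multilin_bounded_def
proof (intro conjI allI impI)
  fix hs :: "fseq list" assume "length hs = 1 \<and> set hs \<subseteq> Hs s"
  then show "Dk t 1 w hs \<in> Hs s" using w by (auto simp: Dk_def intro!: S1_Hs nth_Hs)
next
  fix i :: nat and hs x y a assume i: "i < 1" and h: "length hs = 1 \<and> set hs \<subseteq> Hs s \<and> x \<in> Hs s \<and> y \<in> Hs s"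
  then show "Dk t 1 w (hs[i := fadd x y]) = fadd (Dk t 1 w (hs[i := x])) (Dk t 1 w (hs[i := y]))"
    using w by (auto simp: Dk_def S1_add)
  show "Dk t 1 w (hs[i := fscale a x]) = fscale a (Dk t 1 w (hs[i := x]))"
    using i h by (auto simp: Dk_def S1_sc)
next
  show "\<exists>C. \<forall>hs. length hs = 1 \<and> set hs \<subseteq> Hs s \<longrightarrow> nm (Dk t 1 w hs) \<le> C * prod_list (map nm hs)"
  proof (intro exI allI impI)
    fix hs :: "fseq list" assume h: "length hs = 1 \<and> set hs \<subseteq> Hs s"
    then have e: "hs = [hs!0]" using list1 by blast
    have "nm (Dk t 1 w hs) \<le> 3 * K2 s * (nm w)^2 * nm (hs!0)"
      using h w by (auto simp: Dk_def intro!: S1_norm nth_Hs)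
    also have "\<dots> = 3 * K2 s * (nm w)^2 * prod_list (map nm hs)"
      by (subst e) simp
    finally show "nm (Dk t 1 w hs) \<le> 3 * K2 s * (nm w)^2 * prod_list (map nm hs)" .
  qed
qed

lemma ml2: assumes w: "w \<in> Hs s" shows "multilin_bounded s 2 (Dk t 2 w)"
  unfolding multilin_bounded_def
proof (intro conjI allI impI)
  fix hs :: "fseq list" assume "length hs = 2 \<and> set hs \<subseteq> Hs s"
  then show "Dk t 2 w hs \<in> Hs s" using w by (auto simp: Dk_def intro!: S2_Hs nth_Hs)
next
  fix i :: nat and hs x y a assume i: "i < 2" and h: "length hs = 2 \<and> set hs \<subseteq> Hs s \<and> x \<in> Hs s \<and> y \<in> Hs s"
  then have hs: "hs!0 \<in> Hs s" "hs!1 \<in> Hs s" by (auto intro: nth_Hs)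
  from i have "i = 0 \<or> i = 1" by auto
  then show "Dk t 2 w (hs[i := fadd x y]) = fadd (Dk t 2 w (hs[i := x])) (Dk t 2 w (hs[i := y]))"
    using w h hs by (auto simp: Dk_def S2_add1 S2_add2)
  show "Dk t 2 w (hs[i := fscale a x]) = fscale a (Dk t 2 w (hs[i := x]))"
    using \<open>i = 0 \<or> i = 1\<close> h by (auto simp: Dk_def S2_sc1 S2_sc2)
next
  show "\<exists>C. \<forall>hs. length hs = 2 \<and> set hs \<subseteq> Hs s \<longrightarrow> nm (Dk t 2 w hs) \<le> C * prod_list (map nm hs)"
  proof (intro exI allI impI)
    fix hs :: "fseq list" assume h: "length hs = 2 \<and> set hs \<subseteq> Hs s"
    then have e: "hs = [hs!0, hs!1]" using list2 by blast
    have "nm (Dk t 2 w hs) \<le> 6 * K2 s * nm w * (nm (hs!0) * nm (hs!1))"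
      using h w by (auto simp: Dk_def intro!: S2_norm nth_Hs)
    also have "\<dots> = 6 * K2 s * nm w * prod_list (map nm hs)"
      by (subst (2) e) simp
    finally show "nm (Dk t 2 w hs) \<le> 6 * K2 s * nm w * prod_list (map nm hs)" .
  qed
qed

lemma ml3: assumes w: "w \<in> Hs s" shows "multilin_bounded s 3 (Dk t 3 w)"
  unfolding multilin_bounded_def
proof (intro conjI allI impI)
  fix hs :: "fseq list" assume "length hs = 3 \<and> set hs \<subseteq> Hs s"
  then show "Dk t 3 w hs \<in> Hs s" by (auto simp: Dk_def intro!: S3_Hs nth_Hs)
next
  fix i :: nat and hs x y a assume i: "i < 3" and h: "length hs = 3 \<and> set hs \<subseteq> Hs s \<and> x \<in> Hs s \<and> y \<in> Hs s"
  then have hs: "hs!0 \<in> Hs s" "hs!1 \<in> Hs s" "hs!2 \<in> Hs s" by (auto intro: nth_Hs)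
  from i have "i = 0 \<or> i = 1 \<or> i = 2" by auto
  then show "Dk t 3 w (hs[i := fadd x y]) = fadd (Dk t 3 w (hs[i := x])) (Dk t 3 w (hs[i := y]))"
    using h hs by (auto simp: Dk_def S3_add1 S3_add2 S3_add3)
  show "Dk t 3 w (hs[i := fscale a x]) = fscale a (Dk t 3 w (hs[i := x]))"
    using \<open>i = 0 \<or> i = 1 \<or> i = 2\<close> h by (auto simp: Dk_def S3_sc1 S3_sc2 S3_sc3)
next
  show "\<exists>C. \<forall>hs. length hs = 3 \<and> set hs \<subseteq> Hs s \<longrightarrow> nm (Dk t 3 w hs) \<le> C * prod_list (map nm hs)"
  proof (intro exI allI impI)
    fix hs :: "fseq list" assume h: "length hs = 3 \<and> set hs \<subseteq> Hs s"
    then have e: "hs = [hs!0, hs!1, hs!2]" using list3 by blast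
    have "nm (Dk t 3 w hs) \<le> 6 * K2 s * (nm (hs!0) * (nm (hs!1) * nm (hs!2)))"
      using h by (auto simp: Dk_def intro!: S3_norm nth_Hs)
    also have "\<dots> = 6 * K2 s * prod_list (map nm hs)"
      by (subst (2) e) simp
    finally show "nm (Dk t 3 w hs) \<le> 6 * K2 s * prod_list (map nm hs)" .
  qed
qed

lemma ml4: assumes "k \<ge> 4" shows "multilin_bounded s k (Dk t k w)"
proof -
  have "Dk t k w = (\<lambda>_. fzero)" using assms by (auto simp: Dk_def)
  then show ?thesis unfolding multilin_bounded_def
    by (auto simp: Hs_zero Hs_norm_zero intro!: exI[where x=0])
qed

lemma ml: "w \<in> Hs s \<Longrightarrow> multilin_bounded s k (Dk t k w)"
proof -
  assume w: "w \<in> Hs s"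
  consider "k = 0" | "k = 1" | "k = 2" | "k = 3" | "k \<ge> 4" by linarith
  then show ?thesis using ml0 ml1 ml2 ml3 ml4 w by cases auto
qed

end


lemma ineq0:
  fixes x a K e d :: real
  assumes "0 \<le> x" "x < d" "d \<le> 1" "d \<le> e / (K * (3 * a + 1) + 1)" "0 \<le> K" "0 \<le> a" "0 < e"
  shows "K * (x * x * a) + K * (x * a * x) + (K * (a * x * x) + K * (x * x * x)) \<le> e * x * 1"
proof -
  have "0 \<le> K * (3 * a + 1)" using assms by simp
  hence D: "K * (3 * a + 1) + 1 > 0" by linarith
  have "x < e / (K * (3 * a + 1) + 1)" using assms by linarith
  hence xe: "x * (K * (3 * a + 1) + 1) < e" using D by (simp add: pos_less_divide_eq)
  have "K * x * (3 * a + x) \<le> K * x * (3 * a + 1)"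
    using assms by (intro mult_left_mono) auto
  also have "\<dots> \<le> x * (K * (3 * a + 1) + 1)" using assms by (simp add: algebra_simps)
  finally have "K * x * (3 * a + x) \<le> e" using xe by linarith
  hence "x * (K * x * (3 * a + x)) \<le> x * e" using assms by (intro mult_left_mono) auto
  then show ?thesis by (simp add: algebra_simps)
qed

lemma ineq1:
  fixes x y K e :: real
  assumes "0 \<le> x" "x < e / (3 * K + 1)" "0 \<le> K" "0 < e" "0 \<le> y"
  shows "K * (y * x * x) + K * (x * y * x) + K * (x * x * y) \<le> e * x * (y * 1)"
proof -
  have D: "3 * K + 1 > 0" using assms by simp
  hence "x * (3 * K + 1) < e" using assms by (simp add: pos_less_divide_eq)
  hence "3 * K * x \<le> e" using assms by (simp add: algebra_simps)
  hence "(3 * K * x) * (x * y) \<le> e * (x * y)" using assms by (intro mult_right_mono) auto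
  then show ?thesis by (simp add: algebra_simps)
qed

context
  fixes s :: real
  assumes s: "s > 1/2"
begin

lemmas Badd' = Bop_add1[OF s] Bop_add2[OF s] Bop_add3[OF s]
lemmas BHs' = Bop_Hs[OF s]

lemma rem0: "w \<in> Hs s \<Longrightarrow> h \<in> Hs s \<Longrightarrow>
  fdiff (fdiff (Bop t (fadd w h) (fadd w h) (fadd w h)) (Bop t w w w)) (S1 t w h)
  = fadd (fadd (Bop t h h w) (Bop t h w h)) (fadd (Bop t w h h) (Bop t h h h))"
  by (simp add: S1_def Badd' Hs_fadd) (rule ext, simp add: fadd_def fdiff_def algebra_simps)

lemma rem1: "w \<in> Hs s \<Longrightarrow> h \<in> Hs s \<Longrightarrow> h1 \<in> Hs s \<Longrightarrow>
  fdiff (fdiff (S1 t (fadd w h) h1) (S1 t w h1)) (S2 t w h h1)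
  = fadd (fadd (Bop t h1 h h) (Bop t h h1 h)) (Bop t h h h1)"
  by (simp add: S1_def S2_def Badd' Hs_fadd) (rule ext, simp add: fadd_def fdiff_def algebra_simps)

lemma rem2: "w \<in> Hs s \<Longrightarrow> h \<in> Hs s \<Longrightarrow> h1 \<in> Hs s \<Longrightarrow> h2 \<in> Hs s \<Longrightarrow>
  fdiff (fdiff (S2 t (fadd w h) h1 h2) (S2 t w h1 h2)) (S3 t h h1 h2) = fzero"
  by (simp add: S2_def S3_def Badd' Hs_fadd) (rule ext, simp add: fadd_def fdiff_def fzero_def algebra_simps)

lemma fdiff_self: "fdiff (fdiff x x) fzero = fzero"
  by (rule ext) (simp add: fdiff_def fzero_def)

lemma prod_nonneg: "0 \<le> prod_list (map (Hs_norm s) hs)"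
  by (induction hs) (simp_all add: Hs_norm_nonneg)

lemma smooth: "smooth_Hs s (Fnl t)"
  unfolding smooth_Hs_def
proof (intro exI[where x="Dk t"] conjI ballI allI impI)
  fix w assume "w \<in> Hs s"
  show "Dk t 0 w [] = Fnl t w" by (simp add: Dk_def Fnl_Bop)
next
  fix k w assume "w \<in> Hs s"
  then show "multilin_bounded s k (Dk t k w)" by (rule ml[OF s])
next
  fix k :: nat and w and e :: real assume w: "w \<in> Hs s" and e: "e > 0"
  have K: "K2 s \<ge> 0" by (rule K2_nonneg)
  consider "k = 0" | "k = 1" | "k = 2" | "k = 3" | "k \<ge> 4" by linarith
  then show "\<exists>\<delta>>0. \<forall>h\<in>Hs s. Hs_norm s h < \<delta> \<longrightarrow> (\<forall>hs. length hs = k \<and> set hs \<subseteq> Hs s \<longrightarrow>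
      Hs_norm s (fdiff (fdiff (Dk t k (fadd w h) hs) (Dk t k w hs)) (Dk t (Suc k) w (h # hs)))
        \<le> e * Hs_norm s h * prod_list (map (Hs_norm s) hs))"
  proof cases
    case 1
    define d where "d = min 1 (e / (K2 s * (3 * Hs_norm s w + 1) + 1))"
    have "0 \<le> K2 s * (3 * Hs_norm s w + 1)" using K by (simp add: Hs_norm_nonneg)
    hence "0 < K2 s * (3 * Hs_norm s w + 1) + 1" by linarith
    hence dpos: "d > 0" unfolding d_def using e by simp
    show ?thesis
    proof (intro exI[where x=d] conjI ballI impI allI)
      fix h hs assume h: "h \<in> Hs s" and hd: "Hs_norm s h < d" and hs: "length hs = k \<and> set hs \<subseteq> Hs s"
      then have hs0: "hs = []" using 1 by simp
      have "Hs_norm s (fdiff (fdiff (Dk t k (fadd w h) hs) (Dk t k w hs)) (Dk t (Suc k) w (h # hs)))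
          = Hs_norm s (fadd (fadd (Bop t h h w) (Bop t h w h)) (fadd (Bop t w h h) (Bop t h h h)))"
        using 1 w h by (simp add: Dk_def rem0)
      also have "\<dots> \<le> K2 s * (Hs_norm s h * Hs_norm s h * Hs_norm s w) + K2 s * (Hs_norm s h * Hs_norm s w * Hs_norm s h)
          + (K2 s * (Hs_norm s w * Hs_norm s h * Hs_norm s h) + K2 s * (Hs_norm s h * Hs_norm s h * Hs_norm s h))"
        using w h by (intro norm_add_le[OF s] Hs_fadd BHs' Bop_norm[OF s])
      also have "\<dots> \<le> e * Hs_norm s h * 1"
        by (rule ineq0[where d=d]) (use hd e K in \<open>auto simp: d_def Hs_norm_nonneg\<close>)
      finally show "Hs_norm s (fdiff (fdiff (Dk t k (fadd w h) hs) (Dk t k w hs)) (Dk t (Suc k) w (h # hs)))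
        \<le> e * Hs_norm s h * prod_list (map (Hs_norm s) hs)" using hs0 by simp
    qed (rule dpos)
  next
    case 2
    define d where "d = e / (3 * K2 s + 1)"
    have "0 < 3 * K2 s + 1" using K by linarith
    hence dpos: "d > 0" unfolding d_def using e by simp
    show ?thesis
    proof (intro exI[where x=d] conjI ballI impI allI)
      fix h hs assume h: "h \<in> Hs s" and hd: "Hs_norm s h < d" and hs: "length hs = k \<and> set hs \<subseteq> Hs s"
      then have e1: "hs = [hs!0]" using 2 list1 by auto
      have h1: "hs!0 \<in> Hs s" using hs 2 by (auto intro: nth_Hs)
      have "Hs_norm s (fdiff (fdiff (Dk t k (fadd w h) hs) (Dk t k w hs)) (Dk t (Suc k) w (h # hs)))
          = Hs_norm s (fadd (fadd (Bop t (hs!0) h h) (Bop t h (hs!0) h)) (Bop t h h (hs!0)))"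
        using 2 w h h1 by (simp add: Dk_def rem1)
      also have "\<dots> \<le> K2 s * (Hs_norm s (hs!0) * Hs_norm s h * Hs_norm s h) + K2 s * (Hs_norm s h * Hs_norm s (hs!0) * Hs_norm s h)
          + K2 s * (Hs_norm s h * Hs_norm s h * Hs_norm s (hs!0))"
        using w h h1 by (intro norm_add_le[OF s] Hs_fadd BHs' Bop_norm[OF s])
      also have "\<dots> \<le> e * Hs_norm s h * (Hs_norm s (hs!0) * 1)"
        by (rule ineq1) (use hd e K in \<open>auto simp: d_def Hs_norm_nonneg\<close>)
      also have "\<dots> = e * Hs_norm s h * prod_list (map (Hs_norm s) hs)"
        by (subst (2) e1) simp
      finally show "Hs_norm s (fdiff (fdiff (Dk t k (fadd w h) hs) (Dk t k w hs)) (Dk t (Suc k) w (h # hs)))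
        \<le> e * Hs_norm s h * prod_list (map (Hs_norm s) hs)" .
    qed (rule dpos)
  next
    case 3
    show ?thesis
    proof (intro exI[where x=1] conjI ballI impI allI)
      fix h hs assume h: "h \<in> Hs s" and hs: "length hs = k \<and> set hs \<subseteq> Hs s"
      have h12: "hs!0 \<in> Hs s" "hs!1 \<in> Hs s" using hs 3 by (auto intro: nth_Hs)
      have "Hs_norm s (fdiff (fdiff (Dk t k (fadd w h) hs) (Dk t k w hs)) (Dk t (Suc k) w (h # hs))) = 0"
        using 3 w h h12 by (simp add: Dk_def rem2 Hs_norm_zero)
      also have "0 \<le> e * Hs_norm s h * prod_list (map (Hs_norm s) hs)"
        using e by (intro mult_nonneg_nonneg prod_nonneg) (auto simp: Hs_norm_nonneg)
      finally show "Hs_norm s (fdiff (fdiff (Dk t k (fadd w h) hs) (Dk t k w hs)) (Dk t (Suc k) w (h # hs)))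
        \<le> e * Hs_norm s h * prod_list (map (Hs_norm s) hs)" .
    qed simp
  next
    case 4
    show ?thesis
    proof (intro exI[where x=1] conjI ballI impI allI)
      fix h hs assume h: "h \<in> Hs s" and hs: "length hs = k \<and> set hs \<subseteq> Hs s"
      have "Hs_norm s (fdiff (fdiff (Dk t k (fadd w h) hs) (Dk t k w hs)) (Dk t (Suc k) w (h # hs))) = 0"
        using 4 by (simp add: Dk_def fdiff_self Hs_norm_zero)
      also have "0 \<le> e * Hs_norm s h * prod_list (map (Hs_norm s) hs)"
        using e by (intro mult_nonneg_nonneg prod_nonneg) (auto simp: Hs_norm_nonneg)
      finally show "Hs_norm s (fdiff (fdiff (Dk t k (fadd w h) hs) (Dk t k w hs)) (Dk t (Suc k) w (h # hs)))
        \<le> e * Hs_norm s h * prod_list (map (Hs_norm s) hs)" .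
    qed simp
  next
    case 5
    show ?thesis
    proof (intro exI[where x=1] conjI ballI impI allI)
      fix h hs assume h: "h \<in> Hs s" and hs: "length hs = k \<and> set hs \<subseteq> Hs s"
      have "Hs_norm s (fdiff (fdiff (Dk t k (fadd w h) hs) (Dk t k w hs)) (Dk t (Suc k) w (h # hs))) = 0"
        using 5 by (simp add: Dk_def fdiff_self Hs_norm_zero)
      also have "0 \<le> e * Hs_norm s h * prod_list (map (Hs_norm s) hs)"
        using e by (intro mult_nonneg_nonneg prod_nonneg) (auto simp: Hs_norm_nonneg)
      finally show "Hs_norm s (fdiff (fdiff (Dk t k (fadd w h) hs) (Dk t k w hs)) (Dk t (Suc k) w (h # hs)))
        \<le> e * Hs_norm s h * prod_list (map (Hs_norm s) hs)" .
    qed simp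
  qed
qed

end


lemma exp_int_integral:
  "((\<lambda>\<tau>. exp (\<i> * of_int k * of_real \<tau>)) has_integral (if k = 0 then of_real (2*pi) else 0)) {0..2*pi}"
proof (cases "k = 0")
  case True
  then show ?thesis using has_integral_const_real[of "1::complex" 0 "2*pi"] by (simp add: scaleR_conv_of_real)
next
  case False
  define a where "a = \<i> * of_int k"
  have a0: "a \<noteq> 0" using False by (simp add: a_def)
  have cont: "continuous_on {0..2*pi} (\<lambda>t. exp (a * complex_of_real t))"
    by (intro continuous_intros)
  have "((\<lambda>t. exp (a * complex_of_real t)) has_integral integral {0..2*pi} (\<lambda>t. exp (a * complex_of_real t))) {0..2*pi}"
    using integrable_continuous_interval[OF cont] by (rule has_integral_integral[THEN iffD1])
  also have "integral {0..2*pi} (\<lambda>t. exp (a * complex_of_real t)) = (exp (a * of_real (2*pi)) - 1) / a"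
    by (rule integral_exp) (use a0 in auto)
  also have "exp (a * of_real (2*pi)) = 1"
  proof -
    have eq: "a * of_real (2*pi) = 0 + \<i> * (of_int k * (of_real pi * 2))" by (simp add: a_def algebra_simps)
    have "exp (a * of_real (2*pi)) = exp (0 + \<i> * (of_int k * (of_real pi * 2)))" using eq by (rule arg_cong)
    also have "\<dots> = exp 0" by (rule exp_plus_2pin)
    also have "\<dots> = 1" by simp
    finally show ?thesis .
  qed
  finally show ?thesis using False by (simp add: a_def mult.assoc)
qed

lemma infsum_diff':
  fixes f g :: "'a \<Rightarrow> 'b::{topological_ab_group_add, t2_space}"
  assumes "f summable_on A" "g summable_on A"
  shows "infsum (\<lambda>x. f x - g x) A = infsum f A - infsum g A"
proof -
  have "infsum (\<lambda>x. f x + (- g x)) A = infsum f A + infsum (\<lambda>x. - g x) A"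
    by (rule infsum_add) (use assms in \<open>auto simp: summable_on_uminus\<close>)
  then show ?thesis by (simp add: infsum_uminus)
qed

lemma summable_restrict:
  fixes c :: "'a \<Rightarrow> complex"
  assumes "(\<lambda>p. norm (c p)) summable_on UNIV"
  shows "(\<lambda>p. if P p then c p else 0) summable_on UNIV"
proof -
  have "(\<lambda>p. norm (if P p then c p else 0)) summable_on UNIV"
    by (rule summable_on_comparison_test[OF assms]) auto
  then show ?thesis by (rule abs_summable_summable)
qed

lemma avg_lemma:
  fixes c :: "'a \<Rightarrow> complex" and \<phi> :: "'a \<Rightarrow> int"
  assumes cs: "(\<lambda>p. norm (c p)) summable_on UNIV"
  shows "integral {0..2*pi} (\<lambda>\<tau>. \<Sum>\<^sub>\<infinity>p. exp (\<i> * of_int (\<phi> p) * of_real \<tau>) * c p)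
       = of_real (2*pi) * (\<Sum>\<^sub>\<infinity>p. if \<phi> p = 0 then c p else 0)"
proof -
  define e where "e = (\<lambda>\<tau> p. exp (\<i> * of_int (\<phi> p) * of_real \<tau>) * c p)"
  have ne: "norm (e \<tau> p) = norm (c p)" for \<tau> p
    by (simp add: e_def norm_mult norm_exp_eq_Re)
  have nes: "(\<lambda>p. norm (e \<tau> p)) summable_on A" for \<tau> A
    unfolding ne using cs by (rule summable_on_subset_banach) simp
  have es: "e \<tau> summable_on A" for \<tau> A
    by (rule abs_summable_summable[OF nes])
  define G where "G = (\<lambda>\<tau>. infsum (e \<tau>) UNIV)"
  define f where "f = (\<lambda>X \<tau>. sum (e \<tau>) X)"
  define T where "T = infsum (\<lambda>p. norm (c p)) UNIV"
  define F where "F = finite_subsets_at_top (UNIV :: 'a set)"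
  have hasT: "(sum (\<lambda>p. norm (c p)) \<longlongrightarrow> T) F"
    using cs unfolding F_def T_def by (simp add: has_sum_def[symmetric])
  have ul: "uniform_limit {0..2*pi} f G F"
    unfolding uniform_limit_iff
  proof (intro allI impI)
    fix \<epsilon> :: real assume "\<epsilon> > 0"
    have ev1: "eventually (\<lambda>X. dist (sum (\<lambda>p. norm (c p)) X) T < \<epsilon>) F"
      using tendstoD[OF hasT \<open>\<epsilon> > 0\<close>] .
    have ev2: "eventually finite F" unfolding F_def by auto
    show "\<forall>\<^sub>F X in F. \<forall>\<tau>\<in>{0..2*pi}. dist (f X \<tau>) (G \<tau>) < \<epsilon>"
      using ev1 ev2
    proof eventually_elim
      case (elim X)
      have csX: "(\<lambda>p. norm (c p)) summable_on X" using cs by (rule summable_on_subset_banach) simp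
      show ?case
      proof
        fix \<tau> :: real
        have "dist (f X \<tau>) (G \<tau>) = norm (infsum (e \<tau>) UNIV - infsum (e \<tau>) X)"
          using elim by (simp add: f_def G_def dist_norm norm_minus_commute)
        also have "infsum (e \<tau>) UNIV - infsum (e \<tau>) X = infsum (e \<tau>) (UNIV - X)"
          by (rule infsum_Diff[symmetric]) (auto intro: es)
        also have "norm \<dots> \<le> infsum (\<lambda>p. norm (e \<tau> p)) (UNIV - X)"
          by (rule norm_infsum_bound[OF nes])
        also have "\<dots> = infsum (\<lambda>p. norm (c p)) (UNIV - X)" by (simp add: ne)
        also have "\<dots> = T - infsum (\<lambda>p. norm (c p)) X"
          unfolding T_def by (rule infsum_Diff) (use cs csX in auto)
        also have "\<dots> = T - sum (\<lambda>p. norm (c p)) X" using elim by simp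
        also have "\<dots> < \<epsilon>" using elim by (simp add: dist_norm)
        finally show "dist (f X \<tau>) (G \<tau>) < \<epsilon>" .
      qed
    qed
  qed
  have cont: "continuous_on {0..2*pi} (f X)" for X
    unfolding f_def e_def by (intro continuous_intros)
  obtain I J where I: "\<And>X. (f X has_integral I X) {0..2*pi}" and J: "(G has_integral J) {0..2*pi}"
    and IJ: "(I \<longlongrightarrow> J) F"
    using uniform_limit_integral[OF ul cont] unfolding F_def by auto
  define d where "d = (\<lambda>p. if \<phi> p = 0 then c p else 0)"
  have ds: "d summable_on UNIV" unfolding d_def by (rule summable_restrict[OF cs])
  have IX: "I X = sum (\<lambda>p. of_real (2*pi) * d p) X" if "finite X" for X
  proof -
    have "(f X has_integral sum (\<lambda>p. of_real (2*pi) * d p) X) {0..2*pi}"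
      unfolding f_def e_def
    proof (rule has_integral_sum[OF that])
      fix p
      have eq: "(if \<phi> p = 0 then of_real (2*pi) else 0) * c p = of_real (2*pi) * d p"
        by (simp add: d_def)
      show "((\<lambda>\<tau>. exp (\<i> * of_int (\<phi> p) * of_real \<tau>) * c p) has_integral of_real (2*pi) * d p) {0..2*pi}"
        using has_integral_mult_left[OF exp_int_integral[of "\<phi> p"], of "c p"] unfolding eq .
    qed
    then show ?thesis by (rule has_integral_unique[OF I[of X]])
  qed
  have "(sum (\<lambda>p. of_real (2*pi) * d p) \<longlongrightarrow> of_real (2*pi) * infsum d UNIV) F"
    using has_sum_cmult_right[OF has_sum_infsum[OF ds], of "of_real (2*pi)"]
    unfolding F_def has_sum_def .
  moreover have "eventually (\<lambda>X. I X = sum (\<lambda>p. of_real (2*pi) * d p) X) F"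
    unfolding F_def by (intro eventually_finite_subsets_at_top_weakI IX)
  ultimately have "(I \<longlongrightarrow> of_real (2*pi) * infsum d UNIV) F"
    by (rule tendsto_cong[THEN iffD2, rotated])
  hence "J = of_real (2*pi) * infsum d UNIV"
    using IJ by (intro tendsto_unique[of F]) (auto simp: F_def)
  moreover have "integral {0..2*pi} G = J" using J by (rule integral_unique)
  ultimately show ?thesis by (simp add: G_def e_def d_def)
qed


definition cc :: "int \<Rightarrow> fseq \<Rightarrow> int \<times> int \<Rightarrow> complex" where
  "cc n w p = w (fst p) * w (snd p) * cnj (w (fst p + snd p - n))"
definition ph :: "int \<Rightarrow> int \<times> int \<Rightarrow> int" where
  "ph n p = n^3 - (fst p)^3 - (snd p)^3 - (n - fst p - snd p)^3"

lemma l1: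
  assumes s: "s > 1/2" and w: "w \<in> Hs s"
  shows "(\<lambda>n. cmod (w n)) summable_on UNIV"
proof -
  define a where "a = (\<lambda>n. sqrt (Hs_weight s n) * cmod (w n))"
  define b where "b = (\<lambda>n. 1 / sqrt (Hs_weight s n))"
  have ab: "a n * b n = cmod (w n)" for n using W_pos[of s n] by (simp add: a_def b_def)
  have "(\<lambda>n. a n * b n) summable_on UNIV"
  proof (rule cs_infsum(1))
    show "(\<lambda>n. (a n)^2) summable_on UNIV"
      using Hs_summ[OF w] by (simp add: a_def power_mult_distrib)
    show "(\<lambda>n. (b n)^2) summable_on UNIV"
      using invW_summable[OF s] by (simp add: b_def power_divide)
  qed (auto simp: a_def b_def)
  then show ?thesis by (simp add: ab)
qed

lemma Qbound:
  assumes "l2 w"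
  shows "(\<lambda>k. cmod (w k) * cmod (w (k + j))) summable_on UNIV"
    and "infsum (\<lambda>k. cmod (w k) * cmod (w (k + j))) UNIV \<le> H_norm2 w"
proof -
  have s1: "(\<lambda>k. (cmod (w k))^2) summable_on UNIV" using assms by (simp add: l2_def)
  have s2: "(\<lambda>k. (cmod (w (k + j)))^2) summable_on UNIV"
    using has_sum_plus[OF has_sum_infsum[OF s1], of j] unfolding summable_on_def by blast
  have e2: "infsum (\<lambda>k. (cmod (w (k + j)))^2) UNIV = H_norm2 w"
    using has_sum_plus[OF has_sum_infsum[OF s1], of j] by (simp add: H_norm2_def infsumI)
  show "(\<lambda>k. cmod (w k) * cmod (w (k + j))) summable_on UNIV"
    by (rule cs_infsum(1)[OF _ _ s1 s2]) auto
  have "(infsum (\<lambda>k. cmod (w k) * cmod (w (k + j))) UNIV)^2 \<le> (H_norm2 w)^2"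
    using cs_infsum(2)[OF _ _ s1 s2] e2 by (simp add: H_norm2_def power2_eq_square)
  moreover have "H_norm2 w \<ge> 0" unfolding H_norm2_def by (intro infsum_nonneg) auto
  ultimately show "infsum (\<lambda>k. cmod (w k) * cmod (w (k + j))) UNIV \<le> H_norm2 w"
    by (rule power2_le_imp_le)
qed

lemma cc_summable:
  assumes s: "s > 1/2" and w: "w \<in> Hs s"
  shows "(\<lambda>p. norm (cc n w p)) summable_on UNIV"
proof -
  have lw: "l2 w" using Hs_imp_l2[of s w] s w by simp
  define Q where "Q = (\<lambda>m. infsum (\<lambda>k. cmod (w k) * cmod (w (k + (m - n)))) UNIV)"
  have eqf: "(\<lambda>k. norm (cc n w (m, k))) = (\<lambda>k. cmod (w m) * (cmod (w k) * cmod (w (k + (m - n)))))" for m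
    by (rule ext) (simp add: cc_def norm_mult algebra_simps)
  have "(\<lambda>p. norm (cc n w p)) summable_on Sigma UNIV (\<lambda>_. UNIV)"
  proof (rule summable_on_SigmaI[where g="\<lambda>m. cmod (w m) * Q m"])
    fix m :: int
    show "((\<lambda>k. norm (cc n w (m, k))) has_sum cmod (w m) * Q m) UNIV"
      unfolding eqf Q_def by (intro has_sum_cmult_right has_sum_infsum Qbound(1)[OF lw])
  next
    show "(\<lambda>m. cmod (w m) * Q m) summable_on UNIV"
    proof (rule summable_on_comparison_test[where f="\<lambda>m. cmod (w m) * H_norm2 w"])
      show "(\<lambda>m. cmod (w m) * H_norm2 w) summable_on UNIV"
        by (rule summable_on_cmult_left[OF l1[OF s w]])
      fix m
      show "cmod (w m) * Q m \<le> cmod (w m) * H_norm2 w"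
        unfolding Q_def by (intro mult_left_mono Qbound(2)[OF lw]) auto
      show "0 \<le> cmod (w m) * Q m"
        unfolding Q_def by (intro mult_nonneg_nonneg infsum_nonneg) auto
    qed
  qed auto
  then show ?thesis by simp
qed

lemma expo_gen:
  fixes a b c d :: int
  shows "- \<i> * of_int a * of_real (- t) + - \<i> * of_int b * of_real t + - \<i> * of_int c * of_real t
     + - \<i> * of_int d * of_real t = \<i> * of_int (a - b - c - d) * of_real t"
  by (simp add: algebra_simps)

lemma term_eq:
  "exp (- \<i> * of_int (n^3) * of_real (- t)) *
    ((exp (- \<i> * of_int (m^3) * of_real t) * w m) *
     ((exp (- \<i> * of_int (k^3) * of_real t) * w k) *
      cnj (exp (- \<i> * of_int ((- (n - m - k))^3) * of_real t) * w (- (n - m - k)))))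
   = exp (\<i> * of_int (ph n (m, k)) * of_real t) * cc n w (m, k)"
proof -
  have q: "- (n - m - k) = m + k - n" by simp
  have p3: "(m + k - n)^3 = - ((n - m - k)^3)"
  proof -
    have "(m + k - n)^3 = (- (n - m - k))^3" unfolding q ..
    also have "\<dots> = - ((n - m - k)^3)" by (rule power_minus_odd) simp
    finally show ?thesis .
  qed
  have c: "cnj (exp (- \<i> * of_int ((m + k - n)^3) * of_real t)) = exp (- \<i> * of_int ((n - m - k)^3) * of_real t)"
    unfolding p3 by (simp add: exp_cnj)
  define A where "A = - \<i> * of_int (n^3) * of_real (- t)"
  define B where "B = - \<i> * of_int (m^3) * complex_of_real t"
  define C where "C = - \<i> * of_int (k^3) * complex_of_real t"
  define D where "D = - \<i> * of_int ((n - m - k)^3) * complex_of_real t"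
  have "exp (- \<i> * of_int (n^3) * of_real (- t)) *
    ((exp (- \<i> * of_int (m^3) * of_real t) * w m) *
     ((exp (- \<i> * of_int (k^3) * of_real t) * w k) *
      cnj (exp (- \<i> * of_int ((- (n - m - k))^3) * of_real t) * w (- (n - m - k)))))
    = exp A * ((exp B * w m) * ((exp C * w k) * (exp D * cnj (w (m + k - n)))))"
    unfolding q complex_cnj_mult c A_def B_def C_def D_def ..
  also have "\<dots> = (exp A * exp B * exp C * exp D) * (w m * w k * cnj (w (m + k - n)))"
    by (simp only: mult_ac)
  also have "exp A * exp B * exp C * exp D = exp (A + B + C + D)" by (simp only: exp_add)
  also have "A + B + C + D = \<i> * of_int (ph n (m, k)) * of_real t"
    unfolding A_def B_def C_def D_def ph_def fst_conv snd_conv by (rule expo_gen)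
  finally show ?thesis by (simp only: cc_def fst_conv snd_conv)
qed

lemma Fnl_expand:
  assumes s: "s > 1/2" and w: "w \<in> Hs s"
  shows "Fnl t w n = (\<Sum>\<^sub>\<infinity>p. exp (\<i> * of_int (ph n p) * of_real t) * cc n w p)"
proof -
  define g where "g = (\<lambda>p. exp (\<i> * of_int (ph n p) * of_real t) * cc n w p)"
  have gs: "g summable_on UNIV"
  proof (rule abs_summable_summable)
    show "(\<lambda>p. norm (g p)) summable_on UNIV"
      using cc_summable[OF s w, of n] by (simp add: g_def norm_mult norm_exp_eq_Re)
  qed
  have "Fnl t w n = exp (- \<i> * of_int (n^3) * of_real (- t)) *
     (\<Sum>\<^sub>\<infinity>m. (exp (- \<i> * of_int (m^3) * of_real t) * w m) *
        (\<Sum>\<^sub>\<infinity>k. (exp (- \<i> * of_int (k^3) * of_real t) * w k) *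
           cnj (exp (- \<i> * of_int ((- (n - m - k))^3) * of_real t) * w (- (n - m - k)))))"
    by (simp add: Fnl_def Let_def H1_def fmult_def fconj_def)
  also have "\<dots> = (\<Sum>\<^sub>\<infinity>m. \<Sum>\<^sub>\<infinity>k. exp (- \<i> * of_int (n^3) * of_real (- t)) *
    ((exp (- \<i> * of_int (m^3) * of_real t) * w m) *
     ((exp (- \<i> * of_int (k^3) * of_real t) * w k) *
      cnj (exp (- \<i> * of_int ((- (n - m - k))^3) * of_real t) * w (- (n - m - k))))))"
    by (simp only: infsum_cmult_right'[symmetric])
  also have "\<dots> = (\<Sum>\<^sub>\<infinity>m. \<Sum>\<^sub>\<infinity>k. g (m, k))"
    unfolding g_def by (simp only: term_eq)
  also have "\<dots> = infsum g UNIV"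
    using infsum_Sigma'_banach[of "\<lambda>m k. g (m, k)" UNIV "\<lambda>_. UNIV"] gs by simp
  finally show ?thesis by (simp add: g_def)
qed


lemma ph_factor: "ph n (m, k) = 3 * (m + k) * (n - m) * (n - k)"
  unfolding ph_def by (simp add: power3_eq_cube algebra_simps)

lemma ph_zero: "ph n (m, k) = 0 \<longleftrightarrow> (k = - m \<or> m = n \<or> k = n)"
  unfolding ph_factor by auto

lemma infsum_delta: "infsum (\<lambda>x. if x = a then f x else 0) UNIV = f a"
proof -
  have "infsum (\<lambda>x. if x = a then f x else 0) UNIV = infsum f {a}"
    by (rule infsum_cong_neutral) auto
  then show ?thesis by simp
qed

lemma infsum_pairs:
  fixes g :: "int \<times> int \<Rightarrow> complex"
  assumes "g summable_on UNIV"
  shows "infsum g UNIV = infsum (\<lambda>m. infsum (\<lambda>k. g (m, k)) UNIV) UNIV"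
  using infsum_Sigma'_banach[of "\<lambda>m k. g (m, k)" UNIV "\<lambda>_. UNIV"] assms by simp

lemma summable_on_diff':
  fixes f g :: "'a \<Rightarrow> 'b::{topological_ab_group_add}"
  assumes "f summable_on A" "g summable_on A"
  shows "(\<lambda>x. f x - g x) summable_on A"
proof -
  have "(\<lambda>x. f x + (- g x)) summable_on A"
    by (rule summable_on_add) (use assms in \<open>auto simp: summable_on_uminus\<close>)
  then show ?thesis by simp
qed

lemma has_sum_diff':
  fixes f g :: "'a \<Rightarrow> 'b::{topological_ab_group_add}"
  assumes "(f has_sum a) A" "(g has_sum b) A"
  shows "((\<lambda>x. f x - g x) has_sum (a - b)) A"
proof -
  have "((\<lambda>x. - g x) has_sum (- b)) A" using assms(2) by (simp add: has_sum_uminus)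
  from has_sum_add[OF assms(1) this] show ?thesis by simp
qed

lemma infsum7:
  fixes a b c d e f g :: "'a \<Rightarrow> complex"
  assumes "a summable_on UNIV" "b summable_on UNIV" "c summable_on UNIV" "d summable_on UNIV"
    "e summable_on UNIV" "f summable_on UNIV" "g summable_on UNIV"
  shows "infsum (\<lambda>p. a p + b p + c p - d p - e p - f p + g p) UNIV
    = infsum a UNIV + infsum b UNIV + infsum c UNIV - infsum d UNIV - infsum e UNIV - infsum f UNIV + infsum g UNIV"
proof (rule infsumI)
  note h = has_sum_infsum[OF assms(1)] has_sum_infsum[OF assms(2)] has_sum_infsum[OF assms(3)]
    has_sum_infsum[OF assms(4)] has_sum_infsum[OF assms(5)] has_sum_infsum[OF assms(6)] has_sum_infsum[OF assms(7)]
  show "((\<lambda>p. a p + b p + c p - d p - e p - f p + g p) has_sum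
    (infsum a UNIV + infsum b UNIV + infsum c UNIV - infsum d UNIV - infsum e UNIV - infsum f UNIV + infsum g UNIV)) UNIV"
    by (intro has_sum_add has_sum_diff' h)
qed

lemma normsq_sum:
  assumes "l2 w"
  shows "infsum (\<lambda>k. w k * cnj (w k)) UNIV = of_real (H_norm2 w)"
proof -
  have "((\<lambda>k. complex_of_real ((cmod (w k))^2)) has_sum of_real (H_norm2 w)) UNIV"
    using assms unfolding l2_def H_norm2_def by (intro has_sum_of_real has_sum_infsum)
  moreover have "(\<lambda>k. complex_of_real ((cmod (w k))^2)) = (\<lambda>k. w k * cnj (w k))"
    by (rule ext, rule complex_norm_square)
  ultimately show ?thesis by (simp only:) (rule infsumI)
qed

lemma resonant_sum:
  assumes s: "s > 1/2" and w: "w \<in> Hs s"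
  shows "(\<Sum>\<^sub>\<infinity>p. if ph n p = 0 then cc n w p else 0)
     = bracket w w * cnj (w (- n)) + w n * of_real (H_norm2 w) + w n * of_real (H_norm2 w)
       - cc n w (n, - n) - cc n w (- n, n) - cc n w (n, n) + (if n = 0 then cc n w (0, 0) else 0)"
proof -
  have cs: "(\<lambda>p. norm (cc n w p)) summable_on UNIV" by (rule cc_summable[OF s w])
  have lw: "l2 w" using Hs_imp_l2[of s w] s w by simp
  define c where "c = cc n w"
  define cA where "cA = (\<lambda>p. if snd p = - fst p then c p else 0)"
  define cB where "cB = (\<lambda>p. if fst p = n then c p else 0)"
  define cC where "cC = (\<lambda>p. if snd p = n then c p else 0)"
  define cAB where "cAB = (\<lambda>p. if p = (n, - n) then c p else 0)"
  define cAC where "cAC = (\<lambda>p. if p = (- n, n) then c p else 0)"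
  define cBC where "cBC = (\<lambda>p. if p = (n, n) then c p else 0)"
  define cABC where "cABC = (\<lambda>p. if p = (0, 0) \<and> n = 0 then c p else 0)"
  have sA: "cA summable_on UNIV" unfolding cA_def c_def by (rule summable_restrict[OF cs])
  have sB: "cB summable_on UNIV" unfolding cB_def c_def by (rule summable_restrict[OF cs])
  have sC: "cC summable_on UNIV" unfolding cC_def c_def by (rule summable_restrict[OF cs])
  have sAB: "cAB summable_on UNIV" unfolding cAB_def c_def by (rule summable_restrict[OF cs])
  have sAC: "cAC summable_on UNIV" unfolding cAC_def c_def by (rule summable_restrict[OF cs])
  have sBC: "cBC summable_on UNIV" unfolding cBC_def c_def by (rule summable_restrict[OF cs])
  have sABC: "cABC summable_on UNIV" unfolding cABC_def c_def by (rule summable_restrict[OF cs])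
  have dec: "(if ph n p = 0 then cc n w p else 0) = cA p + cB p + cC p - cAB p - cAC p - cBC p + cABC p" for p
  proof (cases p)
    case (Pair m k)
    have e1: "((m, k) = (n, - n)) = (k = - m \<and> m = n)" by auto
    have e2: "((m, k) = (- n, n)) = (k = - m \<and> k = n)" by auto
    have e3: "((m, k) = (n, n)) = (m = n \<and> k = n)" by auto
    have e4: "((m, k) = (0, 0) \<and> n = 0) = (k = - m \<and> m = n \<and> k = n)" by auto
    show ?thesis unfolding Pair ph_zero cA_def cB_def cC_def cAB_def cAC_def cBC_def cABC_def fst_conv snd_conv e1 e2 e3 e4
      by (cases "k = - m"; cases "m = n"; cases "k = n") (simp_all add: c_def)
  qed
  have "(\<Sum>\<^sub>\<infinity>p. if ph n p = 0 then cc n w p else 0)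
      = infsum cA UNIV + infsum cB UNIV + infsum cC UNIV - infsum cAB UNIV - infsum cAC UNIV - infsum cBC UNIV + infsum cABC UNIV"
    unfolding dec by (rule infsum7[OF sA sB sC sAB sAC sBC sABC])
  also have "infsum cA UNIV = bracket w w * cnj (w (- n))"
  proof -
    have "infsum cA UNIV = infsum (\<lambda>m. infsum (\<lambda>k. cA (m, k)) UNIV) UNIV" by (rule infsum_pairs[OF sA])
    also have "\<dots> = infsum (\<lambda>m. w m * w (- m) * cnj (w (- n))) UNIV"
      by (simp add: cA_def c_def cc_def infsum_delta)
    also have "\<dots> = bracket w w * cnj (w (- n))"
      by (simp add: bracket_def infsum_cmult_left')
    finally show ?thesis .
  qed
  also have "infsum cB UNIV = w n * of_real (H_norm2 w)"
  proof -
    have "infsum cB UNIV = infsum (\<lambda>m. infsum (\<lambda>k. cB (m, k)) UNIV) UNIV" by (rule infsum_pairs[OF sB])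
    also have "\<dots> = infsum (\<lambda>m. if m = n then infsum (\<lambda>k. c (m, k)) UNIV else 0) UNIV"
      by (rule infsum_cong) (simp add: cB_def)
    also have "\<dots> = infsum (\<lambda>k. c (n, k)) UNIV" by (rule infsum_delta)
    also have "\<dots> = infsum (\<lambda>k. w n * (w k * cnj (w k))) UNIV"
      by (simp add: c_def cc_def mult.assoc)
    also have "\<dots> = w n * of_real (H_norm2 w)" by (simp add: infsum_cmult_right' normsq_sum[OF lw])
    finally show ?thesis .
  qed
  also have "infsum cC UNIV = w n * of_real (H_norm2 w)"
  proof -
    have "infsum cC UNIV = infsum (\<lambda>m. infsum (\<lambda>k. cC (m, k)) UNIV) UNIV" by (rule infsum_pairs[OF sC])
    also have "\<dots> = infsum (\<lambda>m. w n * (w m * cnj (w m))) UNIV"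
      by (simp add: cC_def c_def cc_def infsum_delta algebra_simps)
    also have "\<dots> = w n * of_real (H_norm2 w)" by (simp add: infsum_cmult_right' normsq_sum[OF lw])
    finally show ?thesis .
  qed
  also have "infsum cAB UNIV = cc n w (n, - n)" unfolding cAB_def c_def by (rule infsum_delta)
  also have "infsum cAC UNIV = cc n w (- n, n)" unfolding cAC_def c_def by (rule infsum_delta)
  also have "infsum cBC UNIV = cc n w (n, n)" unfolding cBC_def c_def by (rule infsum_delta)
  also have "infsum cABC UNIV = (if n = 0 then cc n w (0, 0) else 0)"
    by (cases "n = 0") (simp_all add: cABC_def c_def infsum_delta)
  finally show ?thesis .
qed

lemma Navg_formula:
  assumes s: "s > 1/2" and w: "w \<in> Hs s"
  shows "Navg w n = bracket w w * cnj (w (- n)) + w n * of_real (H_norm2 w) + w n * of_real (H_norm2 w)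
       - cc n w (n, - n) - cc n w (- n, n) - cc n w (n, n) + (if n = 0 then cc n w (0, 0) else 0)"
proof -
  have "(\<lambda>\<tau>. Fnl \<tau> w n) = (\<lambda>\<tau>. \<Sum>\<^sub>\<infinity>p. exp (\<i> * of_int (ph n p) * of_real \<tau>) * cc n w p)"
    by (rule ext) (rule Fnl_expand[OF s w])
  then have "integral {0..2*pi} (\<lambda>\<tau>. Fnl \<tau> w n) = of_real (2*pi) * (\<Sum>\<^sub>\<infinity>p. if ph n p = 0 then cc n w p else 0)"
    using avg_lemma[OF cc_summable[OF s w, of n], of "ph n"] by simp
  then have "Navg w n = (\<Sum>\<^sub>\<infinity>p. if ph n p = 0 then cc n w p else 0)"
    by (simp add: Navg_def)
  then show ?thesis using resonant_sum[OF s w, of n] by simp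
qed


lemma H1_shift1: "H1 (t + 2*pi) x = H1 t x"
proof (rule ext)
  fix n :: int
  have e: "- \<i> * of_int (n^3) * of_real (t + 2*pi) = - \<i> * of_int (n^3) * of_real t + \<i> * (of_int (- (n^3)) * (of_real pi * 2))"
    by (simp add: algebra_simps)
  show "H1 (t + 2*pi) x n = H1 t x n"
    unfolding H1_def e by (simp only: exp_plus_2pin)
qed

lemma H1_shift2: "H1 (- (t + 2*pi)) x = H1 (- t) x"
proof (rule ext)
  fix n :: int
  have e: "- \<i> * of_int (n^3) * of_real (- (t + 2*pi)) = - \<i> * of_int (n^3) * of_real (- t) + \<i> * (of_int (n^3) * (of_real pi * 2))"
    by (simp add: algebra_simps)
  show "H1 (- (t + 2*pi)) x n = H1 (- t) x n"
    unfolding H1_def e by (simp only: exp_plus_2pin)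
qed

lemma Fnl_periodic: "Fnl (t + 2*pi) w = Fnl t w"
  unfolding Fnl_def Let_def H1_shift1 H1_shift2 ..

theorem lemma2p2:
  fixes s :: real
  assumes "s > 1/2"
  shows "\<exists>C. (\<forall>\<tau> w. w \<in> Hs s \<longrightarrow> Fnl \<tau> w \<in> Hs s \<and> Hs_norm s (Fnl \<tau> w) \<le> C * Hs_norm s w ^ 3)
      \<and> (\<forall>\<tau>. smooth_Hs s (Fnl \<tau>))
      \<and> (\<forall>\<tau> w. w \<in> Hs s \<longrightarrow> Fnl (\<tau> + 2*pi) w = Fnl \<tau> w)
      \<and> (\<forall>w \<in> Hs s.
           Navg w = (\<lambda>n. 2 * w n * complex_of_real (H_norm2 w) + cnj (w (- n)) * bracket w w
                          - (if n = 0 then 2 * w 0 * complex_of_real ((cmod (w 0))^2)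
                             else w n * complex_of_real ((cmod (w n))^2 + 2 * (cmod (w (- n)))^2)))
         \<and> Navg w = (\<lambda>n. if n = 0
                          then 2 * w 0 * complex_of_real (H_norm2 w - (cmod (w 0))^2) + cnj (w 0) * bracket w w
                          else w n * complex_of_real (2 * H_norm2 w - (cmod (w n))^2 - 2 * (cmod (w (- n)))^2)
                               + cnj (w (- n)) * bracket w w))"
proof (intro exI[where x="K2 s"] conjI allI impI ballI)
  fix \<tau> w assume w: "w \<in> Hs s"
  show "Fnl \<tau> w \<in> Hs s" unfolding Fnl_Bop by (rule Bop_Hs[OF assms w w w])
  have "Hs_norm s (Fnl \<tau> w) \<le> K2 s * (Hs_norm s w * Hs_norm s w * Hs_norm s w)"
    unfolding Fnl_Bop by (rule Bop_norm[OF assms w w w])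
  then show "Hs_norm s (Fnl \<tau> w) \<le> K2 s * Hs_norm s w ^ 3"
    by (simp add: power3_eq_cube)
next
  fix \<tau> show "smooth_Hs s (Fnl \<tau>)" by (rule smooth[OF assms])
next
  fix \<tau> w show "Fnl (\<tau> + 2*pi) w = Fnl \<tau> w" by (rule Fnl_periodic)
next
  fix w assume w: "w \<in> Hs s"
  have nsq: "\<And>z. complex_of_real ((cmod z)^2) = z * cnj z" by (rule complex_norm_square)
  have F: "Navg w n = bracket w w * cnj (w (- n)) + w n * of_real (H_norm2 w) + w n * of_real (H_norm2 w)
       - cc n w (n, - n) - cc n w (- n, n) - cc n w (n, n) + (if n = 0 then cc n w (0, 0) else 0)" for n
    by (rule Navg_formula[OF assms w])
  show "Navg w = (\<lambda>n. 2 * w n * complex_of_real (H_norm2 w) + cnj (w (- n)) * bracket w w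
                          - (if n = 0 then 2 * w 0 * complex_of_real ((cmod (w 0))^2)
                             else w n * complex_of_real ((cmod (w n))^2 + 2 * (cmod (w (- n)))^2)))"
  proof (rule ext)
    fix n :: int
    show "Navg w n = 2 * w n * complex_of_real (H_norm2 w) + cnj (w (- n)) * bracket w w
                          - (if n = 0 then 2 * w 0 * complex_of_real ((cmod (w 0))^2)
                             else w n * complex_of_real ((cmod (w n))^2 + 2 * (cmod (w (- n)))^2))"
      unfolding F of_real_add of_real_mult nsq
      by (cases "n = 0") (simp_all add: cc_def algebra_simps)
  qed
  show "Navg w = (\<lambda>n. if n = 0
                          then 2 * w 0 * complex_of_real (H_norm2 w - (cmod (w 0))^2) + cnj (w 0) * bracket w w
                          else w n * complex_of_real (2 * H_norm2 w - (cmod (w n))^2 - 2 * (cmod (w (- n)))^2)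
                               + cnj (w (- n)) * bracket w w)"
  proof (rule ext)
    fix n :: int
    show "Navg w n = (if n = 0
                          then 2 * w 0 * complex_of_real (H_norm2 w - (cmod (w 0))^2) + cnj (w 0) * bracket w w
                          else w n * complex_of_real (2 * H_norm2 w - (cmod (w n))^2 - 2 * (cmod (w (- n)))^2)
                               + cnj (w (- n)) * bracket w w)"
      unfolding F of_real_add of_real_diff of_real_mult nsq
      by (cases "n = 0") (simp_all add: cc_def algebra_simps)
  qed
qed


end
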